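(* Let $m,n$ be positive integers. $J(\mathbf{P}_{m,n})$ under rowmotion and the set of $(m,n)$-partial fully-packed loop configurations under gyration are in equivariant bijection: there is a bijection $\Phi$ from the set of $(m,n)$-partial fully-packed loop configurations to $J(\mathbf{P}_{m,n})$ such that $\Phi(G(F))=\mathrm{Row}(\Phi(F))$ for every configuration $F$.
   Context: The poset $\mathbf{P}_{m,n}$ has elements the integer triples $(i,j,k)$ with $0\le k\le m-1$, $k\le j\le n-1$, $k\le i\le m-1$, and partial order generated by the covering relations: $(i,j,k)$ covers each of $(i+1,j,k)$, $(i,j+1,k)$, $(i-1,j,k-1)$, $(i,j-1,k-1)$ that is an element of $\mathbf{P}_{m,n}$. $J(P)$ is the set of order ideals of $P$. Rowmotion $\mathrm{Row}:J(P)\to J(P)$ sends $X$ to the order ideal generated by the minimal elements of $P\setminus X$. The graph $G_{m,n}$ has vertex set $\{v_{i,j}:0\le i\le m+1,\ 0\le j\le n+1\}\setminus\{v_{0,0},v_{0,n+1},v_{m+1,0},v_{m+1,n+1}\}$ and edges $v_{i,j}v_{i+1,j}$ for $0\le i\le m$, $1\le j\le n$, and $v_{i,j}v_{i,j+1}$ for $1\le i\le m$, $0\le j\le n$ ($i$ indexes rows from the top, $j$ columns from the left). Vertices $v_{i,j}$ with $1\le i\le m$, $1\le j\le n$ are interior. An $(m,n)$-partial fully-packed loop configuration is a subgraph of $G_{m,n}$ (on all vertices) such that every interior vertex has exactly two incident edges, and: for $1\le j\le n$ the edge $v_{0,j}v_{1,j}$ is present iff $j$ is odd, and for $1\le i\le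 m$ the edge $v_{i,0}v_{i,1}$ is present iff $i$ is even. Squares: for $0\le i\le m$, $0\le j\le n$, the square $Q_{i,j}$ has upper-left corner $v_{i,j}$; its sides are top $v_{i,j}v_{i,j+1}$, bottom $v_{i+1,j}v_{i+1,j+1}$, left $v_{i,j}v_{i+1,j}$, right $v_{i,j+1}v_{i+1,j+1}$ (those that are edges of $G_{m,n}$). $Q_{i,j}$ is even if $i+j$ is even, odd otherwise. The local action on $Q_{i,j}$ (for a configuration $F$, looking at which sides of $Q_{i,j}$ are edges of $F$): if $i=0$ or $j=0$ (boundary square), do nothing. If $1\le i\le m-1$, $1\le j\le n-1$ (interior square): if the sides in $F$ are exactly $\{$top, bottom$\}$, replace them by $\{$left, right$\}$, and vice versa. If $1\le i\le m-1$, $j=n$ (right exterior): swap exactly $\{$left$\}$ with exactly $\{$top, bottom$\}$. If $i=m$, $1\le j\le n-1$ (bottom exterior): swap exactly $\{$top$\}$ with exactly $\{$left, right$\}$. If $i=m$, $j=n$: swap exactly $\{$left$\}$ with exactly $\{$top$\}$. In all other cases do nothing. Gyration $G$ applies the local action to all even squares, then to all odd squares; it maps partial fully-packed loop configurations to partial fully-packed loop configurations. *)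

theory Defs
  imports Main
begin

definition Pmn :: "nat \<Rightarrow> nat \<Rightarrow> (int \<times> int \<times> int) set" where
  "Pmn m n = {(i,j,k). 0 \<le> k \<and> k \<le> int m - 1 \<and> k \<le> j \<and> j \<le> int n - 1 \<and> k \<le> i \<and> i \<le> int m - 1}"

text \<open>Covering pairs (y, x): x covers y, i.e. y is smaller than x.\<close>
definition cover_rel :: "nat \<Rightarrow> nat \<Rightarrow> ((int \<times> int \<times> int) \<times> (int \<times> int \<times> int)) set" where
  "cover_rel m n = {(y, x). x \<in> Pmn m n \<and> y \<in> Pmn m n \<and>
     (case x of (i,j,k) \<Rightarrow>
        y = (i+1,j,k) \<or> y = (i,j+1,k) \<or> y = (i-1,j,k-1) \<or> y = (i,j-1,k-1))}"

definition P_le :: "nat \<Rightarrow> nat \<Rightarrow> int \<times> int \<times> int \<Rightarrow> int \<times> int \<times> int \<Rightarrow> bool" where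
  "P_le m n y x \<longleftrightarrow> y \<in> Pmn m n \<and> x \<in> Pmn m n \<and> (y, x) \<in> (cover_rel m n)\<^sup>*"

definition order_ideals :: "nat \<Rightarrow> nat \<Rightarrow> (int \<times> int \<times> int) set set" where
  "order_ideals m n = {X. X \<subseteq> Pmn m n \<and> (\<forall>x\<in>X. \<forall>y. P_le m n y x \<longrightarrow> y \<in> X)}"

definition minimal_elems :: "nat \<Rightarrow> nat \<Rightarrow> (int \<times> int \<times> int) set \<Rightarrow> (int \<times> int \<times> int) set" where
  "minimal_elems m n S = {x \<in> S. \<forall>y\<in>S. P_le m n y x \<longrightarrow> y = x}"

definition rowmotion :: "nat \<Rightarrow> nat \<Rightarrow> (int \<times> int \<times> int) set \<Rightarrow> (int \<times> int \<times> int) set" where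
  "rowmotion m n X = {y. \<exists>z \<in> minimal_elems m n (Pmn m n - X). P_le m n y z}"

text \<open>Vertex v_{i,j} is the pair (i,j); an edge is the 2-element set of its endpoints.\<close>
definition Gverts :: "nat \<Rightarrow> nat \<Rightarrow> (nat \<times> nat) set" where
  "Gverts m n = {(i,j). i \<le> m+1 \<and> j \<le> n+1} - {(0,0),(0,n+1),(m+1,0),(m+1,n+1)}"

definition Gedges :: "nat \<Rightarrow> nat \<Rightarrow> (nat \<times> nat) set set" where
  "Gedges m n = {{(i,j),(i+1,j)} | i j. i \<le> m \<and> 1 \<le> j \<and> j \<le> n}
              \<union> {{(i,j),(i,j+1)} | i j. 1 \<le> i \<and> i \<le> m \<and> j \<le> n}"

definition interior :: "nat \<Rightarrow> nat \<Rightarrow> nat \<times> nat \<Rightarrow> bool" where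
  "interior m n v \<longleftrightarrow> 1 \<le> fst v \<and> fst v \<le> m \<and> 1 \<le> snd v \<and> snd v \<le> n"

definition PFPL :: "nat \<Rightarrow> nat \<Rightarrow> (nat \<times> nat) set set set" where
  "PFPL m n = {F. F \<subseteq> Gedges m n
     \<and> (\<forall>v \<in> Gverts m n. interior m n v \<longrightarrow> card {e \<in> F. v \<in> e} = 2)
     \<and> (\<forall>j. 1 \<le> j \<and> j \<le> n \<longrightarrow> ({(0,j),(1,j)} \<in> F \<longleftrightarrow> odd j))
     \<and> (\<forall>i. 1 \<le> i \<and> i \<le> m \<longrightarrow> ({(i,0),(i,1)} \<in> F \<longleftrightarrow> even i))}"

definition sq_top :: "nat \<Rightarrow> nat \<Rightarrow> (nat \<times> nat) set" where
  "sq_top i j = {(i,j),(i,j+1)}"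
definition sq_bottom :: "nat \<Rightarrow> nat \<Rightarrow> (nat \<times> nat) set" where
  "sq_bottom i j = {(i+1,j),(i+1,j+1)}"
definition sq_left :: "nat \<Rightarrow> nat \<Rightarrow> (nat \<times> nat) set" where
  "sq_left i j = {(i,j),(i+1,j)}"
definition sq_right :: "nat \<Rightarrow> nat \<Rightarrow> (nat \<times> nat) set" where
  "sq_right i j = {(i,j+1),(i+1,j+1)}"

definition swap_sides :: "(nat \<times> nat) set set \<Rightarrow> (nat \<times> nat) set set \<Rightarrow> (nat \<times> nat) set set
    \<Rightarrow> (nat \<times> nat) set set \<Rightarrow> (nat \<times> nat) set set" where
  "swap_sides S A B F =
     (if F \<inter> S = A then (F - A) \<union> B
      else if F \<inter> S = B then (F - B) \<union> A
      else F)"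

definition local_action :: "nat \<Rightarrow> nat \<Rightarrow> nat \<times> nat \<Rightarrow> (nat \<times> nat) set set \<Rightarrow> (nat \<times> nat) set set" where
  "local_action m n q F =
     (case q of (i,j) \<Rightarrow>
       let T = sq_top i j; Bo = sq_bottom i j; L = sq_left i j; R = sq_right i j;
           S = {T, Bo, L, R} \<inter> Gedges m n in
       if i = 0 \<or> j = 0 then F
       else if 1 \<le> i \<and> i \<le> m - 1 \<and> 1 \<le> j \<and> j \<le> n - 1 then swap_sides S {T, Bo} {L, R} F
       else if 1 \<le> i \<and> i \<le> m - 1 \<and> j = n then swap_sides S {L} {T, Bo} F
       else if i = m \<and> 1 \<le> j \<and> j \<le> n - 1 then swap_sides S {T} {L, R} F
       else if i = m \<and> j = n then swap_sides S {L} {T} F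
       else F)"

definition squares_of_parity :: "nat \<Rightarrow> nat \<Rightarrow> bool \<Rightarrow> (nat \<times> nat) list" where
  "squares_of_parity m n ev = [(i,j). i \<leftarrow> [0..<m+1], j \<leftarrow> [0..<n+1], even (i+j) = ev]"

definition gyration :: "nat \<Rightarrow> nat \<Rightarrow> (nat \<times> nat) set set \<Rightarrow> (nat \<times> nat) set set" where
  "gyration m n F =
     fold (local_action m n) (squares_of_parity m n False)
       (fold (local_action m n) (squares_of_parity m n True) F)"

end

theory Submission
  imports Defs
begin


type_synonym pt = "int \<times> int \<times> int"

definition rk :: "pt \<Rightarrow> nat" where
  "rk x = (case x of (i,j,k) \<Rightarrow> nat (i + j - 2*k))"

lemma cover_relD:
  assumes "(y,x) \<in> cover_rel m n"
  shows "x \<in> Pmn m n" "y \<in> Pmn m n" "rk y = Suc (rk x)"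
  using assms by (auto simp: cover_rel_def Pmn_def rk_def split: prod.splits)

lemma cover_rel_neq: "(y,x) \<in> cover_rel m n \<Longrightarrow> y \<noteq> x"
  using cover_relD(3) by (metis n_not_Suc_n)

definition togS :: "nat \<Rightarrow> nat \<Rightarrow> pt set \<Rightarrow> pt set \<Rightarrow> pt set" where
  "togS m n S Y = (Y - S) \<union> {x \<in> S \<inter> Pmn m n.
      (x \<in> Y \<and> (\<exists>u. (x,u) \<in> cover_rel m n \<and> u \<in> Y)) \<or>
      (x \<notin> Y \<and> (\<forall>w. (w,x) \<in> cover_rel m n \<longrightarrow> w \<in> Y))}"

definition nocov :: "nat \<Rightarrow> nat \<Rightarrow> pt set \<Rightarrow> pt set \<Rightarrow> bool" where
  "nocov m n A B \<longleftrightarrow> (\<forall>a\<in>A. \<forall>b\<in>B. (a,b) \<notin> cover_rel m n \<and> (b,a) \<notin> cover_rel m n)"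

lemma togS_empty[simp]: "togS m n {} Y = Y"
  by (auto simp: togS_def)

definition trule :: "nat \<Rightarrow> nat \<Rightarrow> pt \<Rightarrow> pt set \<Rightarrow> bool" where
  "trule m n x Y \<longleftrightarrow> (x \<in> Y \<and> (\<exists>u. (x,u) \<in> cover_rel m n \<and> u \<in> Y)) \<or>
      (x \<notin> Y \<and> (\<forall>w. (w,x) \<in> cover_rel m n \<longrightarrow> w \<in> Y))"

lemma togS_notin: "x \<notin> S \<Longrightarrow> x \<in> togS m n S Y \<longleftrightarrow> x \<in> Y"
  by (auto simp: togS_def)

lemma togS_in: "x \<in> S \<Longrightarrow> x \<in> togS m n S Y \<longleftrightarrow> x \<in> Pmn m n \<and> trule m n x Y"
  by (auto simp: togS_def trule_def)

lemma trule_cong: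
  assumes "x \<in> Y \<longleftrightarrow> x \<in> Z"
    and "\<And>u. (x,u) \<in> cover_rel m n \<Longrightarrow> u \<in> Y \<longleftrightarrow> u \<in> Z"
    and "\<And>w. (w,x) \<in> cover_rel m n \<Longrightarrow> w \<in> Y \<longleftrightarrow> w \<in> Z"
  shows "trule m n x Y \<longleftrightarrow> trule m n x Z"
  using assms unfolding trule_def by blast

lemma trule_togS_other:
  assumes "x \<notin> S" "\<And>u. (x,u) \<in> cover_rel m n \<Longrightarrow> u \<notin> S"
    "\<And>w. (w,x) \<in> cover_rel m n \<Longrightarrow> w \<notin> S"
  shows "trule m n x (togS m n S Y) \<longleftrightarrow> trule m n x Y"
  by (rule trule_cong) (use assms togS_notin in auto)

lemma togS_union:
  assumes "A \<inter> B = {}" "nocov m n A B"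
  shows "togS m n (A \<union> B) Y = togS m n A (togS m n B Y)"
proof (rule set_eqI)
  fix x
  consider "x \<in> A" | "x \<in> B" | "x \<notin> A" "x \<notin> B" by blast
  then show "x \<in> togS m n (A \<union> B) Y \<longleftrightarrow> x \<in> togS m n A (togS m n B Y)"
  proof cases
    case 1
    then have "x \<notin> B" using assms(1) by blast
    moreover have "trule m n x (togS m n B Y) \<longleftrightarrow> trule m n x Y"
      by (rule trule_togS_other) (use 1 assms \<open>x \<notin> B\<close> in \<open>auto simp: nocov_def\<close>)
    ultimately show ?thesis using 1 by (simp add: togS_in)
  next
    case 2
    then have "x \<notin> A" using assms(1) by blast
    then show ?thesis using 2 by (simp add: togS_in togS_notin)
  next
    case 3
    then show ?thesis by (simp add: togS_notin)
  qed
qed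

lemma togS_comm:
  assumes "A \<inter> B = {}" "nocov m n A B"
  shows "togS m n A (togS m n B Y) = togS m n B (togS m n A Y)"
proof -
  have "nocov m n B A" using assms(2) by (auto simp: nocov_def)
  then have "togS m n (B \<union> A) Y = togS m n B (togS m n A Y)"
    using assms(1) by (intro togS_union) auto
  moreover have "togS m n (A \<union> B) Y = togS m n A (togS m n B Y)"
    using assms by (intro togS_union) auto
  ultimately show ?thesis by (simp add: Un_commute)
qed

lemma P_le_rtrancl: "P_le m n y x \<Longrightarrow> (y,x) \<in> (cover_rel m n)\<^sup>*"
  by (simp add: P_le_def)

lemma ideal_iff_cover:
  "X \<in> order_ideals m n \<longleftrightarrow> X \<subseteq> Pmn m n \<and> (\<forall>x w. x \<in> X \<longrightarrow> (w,x) \<in> cover_rel m n \<longrightarrow> w \<in> X)"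
proof
  assume X: "X \<in> order_ideals m n"
  then show "X \<subseteq> Pmn m n \<and> (\<forall>x w. x \<in> X \<longrightarrow> (w,x) \<in> cover_rel m n \<longrightarrow> w \<in> X)"
    unfolding order_ideals_def P_le_def using cover_relD by blast
next
  assume A: "X \<subseteq> Pmn m n \<and> (\<forall>x w. x \<in> X \<longrightarrow> (w,x) \<in> cover_rel m n \<longrightarrow> w \<in> X)"
  have "y \<in> X" if "(y,x) \<in> (cover_rel m n)\<^sup>*" "x \<in> X" for x y
    using that
  proof (induction rule: converse_rtrancl_induct)
    case base then show ?case .
  next
    case (step y z) then show ?case using A by blast
  qed
  then show "X \<in> order_ideals m n" using A unfolding order_ideals_def P_le_def by blast
qed

lemma togS_ideal:
  assumes "Y \<in> order_ideals m n" "nocov m n S S"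
  shows "togS m n S Y \<in> order_ideals m n"
proof -
  have Y: "Y \<subseteq> Pmn m n" "\<And>x w. x \<in> Y \<Longrightarrow> (w,x) \<in> cover_rel m n \<Longrightarrow> w \<in> Y"
    using assms(1) unfolding ideal_iff_cover by blast+
  have SS: "\<And>a b. a \<in> S \<Longrightarrow> b \<in> S \<Longrightarrow> (a,b) \<notin> cover_rel m n"
    using assms(2) by (auto simp: nocov_def)
  show ?thesis unfolding ideal_iff_cover
  proof (intro conjI allI impI)
    show "togS m n S Y \<subseteq> Pmn m n" using Y(1) by (auto simp: togS_def)
  next
    fix x w assume x: "x \<in> togS m n S Y" and c: "(w,x) \<in> cover_rel m n"
    show "w \<in> togS m n S Y"
    proof (cases "x \<in> S")
      case False
      then have "x \<in> Y" using x togS_notin by blast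
      then have "w \<in> Y" using Y(2) c by blast
      show ?thesis
      proof (cases "w \<in> S")
        case True
        then show ?thesis using \<open>w \<in> Y\<close> \<open>x \<in> Y\<close> c cover_relD(2)[OF c]
          unfolding togS_in[OF True] trule_def by blast
      next
        case False then show ?thesis using \<open>w \<in> Y\<close> togS_notin by blast
      qed
    next
      case True
      then have "w \<notin> S" using SS c by blast
      have "x \<in> Pmn m n" "trule m n x Y" using x True togS_in by blast+
      then have "w \<in> Y" using Y(2) c unfolding trule_def by blast
      then show ?thesis using \<open>w \<notin> S\<close> togS_notin by blast
    qed
  qed
qed

lemma togS_invol:
  assumes "Y \<in> order_ideals m n" "nocov m n S S"
  shows "togS m n S (togS m n S Y) = Y"
proof (rule set_eqI)
  fix x
  have Y: "Y \<subseteq> Pmn m n" "\<And>x w. x \<in> Y \<Longrightarrow> (w,x) \<in> cover_rel m n \<Longrightarrow> w \<in> Y"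
    using assms(1) unfolding ideal_iff_cover by blast+
  have SS: "\<And>a b. a \<in> S \<Longrightarrow> b \<in> S \<Longrightarrow> (a,b) \<notin> cover_rel m n"
    using assms(2) by (auto simp: nocov_def)
  show "x \<in> togS m n S (togS m n S Y) \<longleftrightarrow> x \<in> Y"
  proof (cases "x \<in> S")
    case False then show ?thesis by (simp add: togS_notin)
  next
    case True
    have up: "\<And>u. (x,u) \<in> cover_rel m n \<Longrightarrow> u \<in> togS m n S Y \<longleftrightarrow> u \<in> Y"
      using SS True togS_notin by metis
    have dn: "\<And>w. (w,x) \<in> cover_rel m n \<Longrightarrow> w \<in> togS m n S Y \<longleftrightarrow> w \<in> Y"
      using SS True togS_notin by metis
    show ?thesis
    proof (cases "x \<in> Pmn m n")
      case False then show ?thesis using True Y(1) by (auto simp: togS_in)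
    next
      case xP: True
      have "x \<in> togS m n S Y \<longleftrightarrow> trule m n x Y" using True xP togS_in by blast
      then show ?thesis using True xP up dn Y(2) unfolding togS_in[OF True] trule_def
        by blast
    qed
  qed
qed

lemma togS_bij:
  assumes "nocov m n S S"
  shows "bij_betw (togS m n S) (order_ideals m n) (order_ideals m n)"
  by (rule bij_betw_byWitness[where f' = "togS m n S"])
     (use assms togS_ideal togS_invol in auto)



lemma rtrancl_rk: "(y,x) \<in> (cover_rel m n)\<^sup>* \<Longrightarrow> rk x \<le> rk y"
  by (induction rule: rtrancl_induct) (auto dest: cover_relD(3))

lemma trancl_rk: "(y,x) \<in> (cover_rel m n)\<^sup>+ \<Longrightarrow> rk x < rk y"
  by (induction rule: trancl_induct) (auto dest: cover_relD(3))

lemma Row_sub: "rowmotion m n X \<subseteq> Pmn m n"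
  by (auto simp: rowmotion_def P_le_def)

lemma Row_ideal: "rowmotion m n X \<in> order_ideals m n"
  unfolding order_ideals_def rowmotion_def P_le_def
  by (auto intro: rtrancl_trans)

lemma below_Row:
  assumes X: "X \<in> order_ideals m n" and u: "u \<in> rowmotion m n X" and c: "(x,u) \<in> cover_rel m n"
  shows "x \<in> X"
proof (rule ccontr)
  assume nx: "x \<notin> X"
  obtain z where z: "z \<in> minimal_elems m n (Pmn m n - X)" "P_le m n u z"
    using u by (auto simp: rowmotion_def)
  have xP: "x \<in> Pmn m n" using cover_relD(2)[OF c] .
  have "(x,z) \<in> (cover_rel m n)\<^sup>+" using c z(2) unfolding P_le_def
    by (meson rtrancl_into_trancl2)
  then have "P_le m n x z" using xP z(2) unfolding P_le_def by auto
  then have "x = z" using z(1) nx xP unfolding minimal_elems_def by blast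
  with \<open>(x,z) \<in> _\<close> show False using trancl_rk by fastforce
qed

lemma Row_char:
  assumes X: "X \<in> order_ideals m n" and xP: "x \<in> Pmn m n"
  shows "x \<in> rowmotion m n X \<longleftrightarrow>
     (x \<notin> X \<and> (\<forall>w. (w,x) \<in> cover_rel m n \<longrightarrow> w \<in> X)) \<or>
     (\<exists>u. (x,u) \<in> cover_rel m n \<and> u \<in> rowmotion m n X)"
proof
  assume "x \<in> rowmotion m n X"
  then obtain z where z: "z \<in> minimal_elems m n (Pmn m n - X)" "P_le m n x z"
    by (auto simp: rowmotion_def)
  show "(x \<notin> X \<and> (\<forall>w. (w,x) \<in> cover_rel m n \<longrightarrow> w \<in> X)) \<or>
     (\<exists>u. (x,u) \<in> cover_rel m n \<and> u \<in> rowmotion m n X)"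
  proof (cases "x = z")
    case True
    have "x \<notin> X" using z(1) True by (auto simp: minimal_elems_def)
    moreover have "w \<in> X" if c: "(w,x) \<in> cover_rel m n" for w
    proof (rule ccontr)
      assume "w \<notin> X"
      have "P_le m n w z" using c True cover_relD[OF c] by (auto simp: P_le_def)
      then have "w = z" using z(1) \<open>w \<notin> X\<close> cover_relD(2)[OF c] by (auto simp: minimal_elems_def)
      then show False using c True cover_rel_neq by blast
    qed
    ultimately show ?thesis by blast
  next
    case False
    have "(x,z) \<in> (cover_rel m n)\<^sup>*" using z(2) by (simp add: P_le_def)
    then obtain u where u: "(x,u) \<in> cover_rel m n" "(u,z) \<in> (cover_rel m n)\<^sup>*"
      using False by (metis converse_rtranclE)
    have "P_le m n u z" using u z(2) cover_relD(1)[OF u(1)] by (auto simp: P_le_def)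
    then have "u \<in> rowmotion m n X" using z(1) by (auto simp: rowmotion_def)
    then show ?thesis using u(1) by blast
  qed
next
  assume A: "(x \<notin> X \<and> (\<forall>w. (w,x) \<in> cover_rel m n \<longrightarrow> w \<in> X)) \<or>
     (\<exists>u. (x,u) \<in> cover_rel m n \<and> u \<in> rowmotion m n X)"
  show "x \<in> rowmotion m n X"
  proof (cases "x \<notin> X \<and> (\<forall>w. (w,x) \<in> cover_rel m n \<longrightarrow> w \<in> X)")
    case True
    have "x \<in> minimal_elems m n (Pmn m n - X)"
      unfolding minimal_elems_def
    proof (intro CollectI conjI ballI impI)
      show "x \<in> Pmn m n - X" using True xP by blast
    next
      fix y assume y: "y \<in> Pmn m n - X" "P_le m n y x"
      show "y = x"
      proof (rule ccontr)
        assume "y \<noteq> x"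
        have "(y,x) \<in> (cover_rel m n)\<^sup>*" using y(2) by (simp add: P_le_def)
        then obtain w where w: "(y,w) \<in> (cover_rel m n)\<^sup>*" "(w,x) \<in> cover_rel m n"
          using \<open>y \<noteq> x\<close> by (metis rtranclE)
        have "w \<in> X" using True w(2) by blast
        moreover have "P_le m n y w" using w y(1) cover_relD[OF w(2)] by (auto simp: P_le_def)
        ultimately have "y \<in> X" using X unfolding order_ideals_def by blast
        then show False using y(1) by blast
      qed
    qed
    moreover have "P_le m n x x" using xP by (simp add: P_le_def)
    ultimately show ?thesis by (auto simp: rowmotion_def)
  next
    case False
    then obtain u where u: "(x,u) \<in> cover_rel m n" "u \<in> rowmotion m n X" using A by blast
    then obtain z where z: "z \<in> minimal_elems m n (Pmn m n - X)" "P_le m n u z"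
      by (auto simp: rowmotion_def)
    have "P_le m n x z" using u(1) z(2) xP
      unfolding P_le_def by (meson converse_rtrancl_into_rtrancl)
    then show ?thesis using z(1) by (auto simp: rowmotion_def)
  qed
qed

definition Gr :: "nat \<Rightarrow> nat \<Rightarrow> nat \<Rightarrow> pt set \<Rightarrow> pt set" where
  "Gr m n r = togS m n {x \<in> Pmn m n. rk x = r}"

fun compl :: "nat \<Rightarrow> nat \<Rightarrow> nat list \<Rightarrow> pt set \<Rightarrow> pt set" where
  "compl m n [] = id"
| "compl m n (r # rs) = compl m n rs \<circ> Gr m n r"

lemma compl_append: "compl m n (xs @ ys) = compl m n ys \<circ> compl m n xs"
  by (induction xs) auto

lemma compl_Row_aux:
  assumes X: "X \<in> order_ideals m n"
  shows "compl m n [0..<t] X = {x \<in> X. t \<le> rk x} \<union> {x \<in> rowmotion m n X. rk x < t}"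
proof (induction t)
  case 0
  then show ?case by auto
next
  case (Suc t)
  let ?Y = "compl m n [0..<t] X"
  have XP: "X \<subseteq> Pmn m n" using X by (auto simp: order_ideals_def)
  have RP: "rowmotion m n X \<subseteq> Pmn m n" by (rule Row_sub)
  have "compl m n [0..<Suc t] X = Gr m n t ?Y" by (simp add: compl_append)
  also have "\<dots> = {x \<in> X. Suc t \<le> rk x} \<union> {x \<in> rowmotion m n X. rk x < Suc t}"
  proof (rule set_eqI)
    fix x
    show "x \<in> Gr m n t ?Y \<longleftrightarrow> x \<in> {x \<in> X. Suc t \<le> rk x} \<union> {x \<in> rowmotion m n X. rk x < Suc t}"
    proof (cases "x \<in> Pmn m n \<and> rk x = t")
      case False
      then have "x \<in> Gr m n t ?Y \<longleftrightarrow> x \<in> ?Y" unfolding Gr_def by (intro togS_notin) auto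
      then show ?thesis using False Suc XP RP by auto
    next
      case True
      then have "x \<in> Gr m n t ?Y \<longleftrightarrow> trule m n x ?Y" unfolding Gr_def
        by (subst togS_in) auto
      also have "\<dots> \<longleftrightarrow> (x \<in> X \<and> (\<exists>u. (x,u) \<in> cover_rel m n \<and> u \<in> rowmotion m n X)) \<or>
          (x \<notin> X \<and> (\<forall>w. (w,x) \<in> cover_rel m n \<longrightarrow> w \<in> X))"
      proof -
        have a: "x \<in> ?Y \<longleftrightarrow> x \<in> X" using True Suc by auto
        have b: "u \<in> ?Y \<longleftrightarrow> u \<in> rowmotion m n X" if "(x,u) \<in> cover_rel m n" for u
          using cover_relD(3)[OF that] True Suc by auto
        have c: "w \<in> ?Y \<longleftrightarrow> w \<in> X" if "(w,x) \<in> cover_rel m n" for w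
          using cover_relD(3)[OF that] True Suc by auto
        show ?thesis unfolding trule_def using a b c by blast
      qed
      also have "\<dots> \<longleftrightarrow> x \<in> rowmotion m n X"
        using Row_char[OF X, of x] True below_Row[OF X] by blast
      finally show ?thesis using True by auto
    qed
  qed
  finally show ?case .
qed

lemma rk_le: "x \<in> Pmn m n \<Longrightarrow> rk x \<le> m + n"
  by (auto simp: Pmn_def rk_def)

lemma Row_compl:
  assumes X: "X \<in> order_ideals m n"
  shows "rowmotion m n X = compl m n [0..<Suc (m+n)] X"
proof -
  have XP: "X \<subseteq> Pmn m n" using X by (auto simp: order_ideals_def)
  show ?thesis unfolding compl_Row_aux[OF X]
    using XP Row_sub[of m n X] rk_le[of _ m n] by (force simp: less_Suc_eq_le)
qed



lemma nocov_rk: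
  assumes "\<And>a b. a \<in> A \<Longrightarrow> b \<in> B \<Longrightarrow> rk a \<noteq> Suc (rk b) \<and> rk b \<noteq> Suc (rk a)"
  shows "nocov m n A B"
  unfolding nocov_def using assms cover_relD(3) by metis

definition Ev :: "nat \<Rightarrow> nat \<Rightarrow> nat \<Rightarrow> pt set \<Rightarrow> pt set" where
  "Ev m n t = togS m n {x \<in> Pmn m n. even (rk x) \<and> rk x \<le> t}"
definition Od :: "nat \<Rightarrow> nat \<Rightarrow> nat \<Rightarrow> pt set \<Rightarrow> pt set" where
  "Od m n t = togS m n {x \<in> Pmn m n. odd (rk x) \<and> rk x \<le> t}"

definition Wt :: "nat \<Rightarrow> nat \<Rightarrow> nat \<Rightarrow> nat \<Rightarrow> pt set \<Rightarrow> pt set" where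
  "Wt m n R t = compl m n [Suc t..<Suc R] \<circ> Od m n t \<circ> Ev m n t"

lemma compl_togS_comm:
  assumes "\<And>r a. r \<in> set rs \<Longrightarrow> a \<in> A \<Longrightarrow> rk a \<noteq> r \<and> rk a \<noteq> Suc r \<and> r \<noteq> Suc (rk a)"
  shows "compl m n rs (togS m n A Y) = togS m n A (compl m n rs Y)"
  using assms
proof (induction rs arbitrary: Y)
  case Nil then show ?case by simp
next
  case (Cons r rs)
  have "Gr m n r (togS m n A Y) = togS m n A (Gr m n r Y)"
    unfolding Gr_def
    by (rule togS_comm) (use Cons.prems in \<open>auto intro!: nocov_rk\<close>)
  then show ?case using Cons by simp
qed

lemma par_nocov: "nocov m n {x \<in> Pmn m n. P (rk x) \<and> even (rk x) = b} {x \<in> Pmn m n. Q (rk x) \<and> even (rk x) = b}"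
  by (rule nocov_rk) auto

lemma Ev_bij: "bij_betw (Ev m n t) (order_ideals m n) (order_ideals m n)"
proof -
  have "nocov m n {x \<in> Pmn m n. even (rk x) \<and> rk x \<le> t} {x \<in> Pmn m n. even (rk x) \<and> rk x \<le> t}"
    by (rule nocov_rk) auto
  then show ?thesis unfolding Ev_def by (rule togS_bij)
qed

lemma Od_bij: "bij_betw (Od m n t) (order_ideals m n) (order_ideals m n)"
proof -
  have "nocov m n {x \<in> Pmn m n. odd (rk x) \<and> rk x \<le> t} {x \<in> Pmn m n. odd (rk x) \<and> rk x \<le> t}"
    by (rule nocov_rk) auto
  then show ?thesis unfolding Od_def by (rule togS_bij)
qed

lemma Wt_step_odd:
  assumes "Suc t \<le> R" "odd (Suc t)"
  shows "Wt m n R (Suc t) Y = Wt m n R t Y"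
proof -
  have U: "[Suc t..<Suc R] = Suc t # [Suc (Suc t)..<Suc R]" using assms by (simp add: upt_conv_Cons)
  have s1: "{x \<in> Pmn m n. odd (rk x) \<and> rk x \<le> Suc t} =
      {x \<in> Pmn m n. rk x = Suc t} \<union> {x \<in> Pmn m n. odd (rk x) \<and> rk x \<le> t}"
    using assms by auto
  have s2: "{x \<in> Pmn m n. even (rk x) \<and> rk x \<le> Suc t} = {x \<in> Pmn m n. even (rk x) \<and> rk x \<le> t}"
    using assms by (auto simp: le_Suc_eq)
  have et: "even t" using assms by simp
  have "Od m n (Suc t) Z = Gr m n (Suc t) (Od m n t Z)" for Z
    unfolding Od_def Gr_def s1 by (rule togS_union) (use et in \<open>auto intro!: nocov_rk\<close>)
  then show ?thesis unfolding Wt_def U using s2 by (simp add: Ev_def)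
qed

lemma Wt_step_even:
  assumes "Suc t \<le> R" "even (Suc t)"
  shows "Wt m n R (Suc t) (Od m n t (Ev m n t Y)) = Od m n t (Ev m n t (Wt m n R t Y))"
proof -
  have U: "[Suc t..<Suc R] = Suc t # [Suc (Suc t)..<Suc R]" using assms by (simp add: upt_conv_Cons)
  have s1: "{x \<in> Pmn m n. even (rk x) \<and> rk x \<le> Suc t} =
       {x \<in> Pmn m n. even (rk x) \<and> rk x \<le> t} \<union> {x \<in> Pmn m n. rk x = Suc t}"
    using assms by auto
  have s2: "{x \<in> Pmn m n. odd (rk x) \<and> rk x \<le> Suc t} = {x \<in> Pmn m n. odd (rk x) \<and> rk x \<le> t}"
    using assms by (auto simp: le_Suc_eq)
  have ot: "odd t" using assms by simp
  have E: "Ev m n (Suc t) Z = Ev m n t (Gr m n (Suc t) Z)" for Z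
    unfolding Ev_def Gr_def s1 by (rule togS_union) (use ot in \<open>auto intro!: nocov_rk\<close>)
  have O: "Od m n (Suc t) Z = Od m n t Z" for Z unfolding Od_def s2 ..
  let ?U = "compl m n [Suc (Suc t)..<Suc R]"
  have c1: "?U (Od m n t Z) = Od m n t (?U Z)" for Z
    unfolding Od_def by (rule compl_togS_comm) auto
  have c2: "?U (Ev m n t Z) = Ev m n t (?U Z)" for Z
    unfolding Ev_def by (rule compl_togS_comm) auto
  show ?thesis unfolding Wt_def U using c1 c2 E O by simp
qed

lemma Wt_conj:
  assumes "t \<le> R"
  shows "\<exists>C. bij_betw C (order_ideals m n) (order_ideals m n) \<and> (\<forall>Y. Wt m n R t (C Y) = C (Wt m n R 0 Y))"
  using assms
proof (induction t)
  case 0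
  show ?case by (intro exI[of _ id]) (auto simp: bij_betw_def)
next
  case (Suc t)
  then obtain C where C: "bij_betw C (order_ideals m n) (order_ideals m n)"
    "\<forall>Y. Wt m n R t (C Y) = C (Wt m n R 0 Y)" by auto
  show ?case
  proof (cases "odd (Suc t)")
    case True
    then show ?thesis using C Wt_step_odd[OF Suc.prems True] by metis
  next
    case False
    let ?C = "Od m n t \<circ> Ev m n t \<circ> C"
    have "bij_betw ?C (order_ideals m n) (order_ideals m n)"
      using C(1) Ev_bij Od_bij by (metis bij_betw_trans)
    moreover have "Wt m n R (Suc t) (?C Y) = ?C (Wt m n R 0 Y)" for Y
      using Wt_step_even[OF Suc.prems, of m n "C Y"] False C(2) by simp
    ultimately show ?thesis by blast
  qed
qed

lemma Wt0: "Wt m n R 0 = compl m n [0..<Suc R]"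
proof -
  have e: "{x \<in> Pmn m n. odd (rk x) \<and> rk x \<le> 0} = {}" by auto
  have O: "Od m n 0 = id" unfolding Od_def e by (simp add: fun_eq_iff)
  have "{x \<in> Pmn m n. even (rk x) \<and> rk x \<le> 0} = {x \<in> Pmn m n. rk x = 0}" by auto
  then have E: "Ev m n 0 = Gr m n 0" unfolding Ev_def Gr_def by simp
  have "[0..<Suc R] = 0 # [Suc 0..<Suc R]" by (simp add: upt_conv_Cons)
  then show ?thesis unfolding Wt_def O E by simp
qed

definition EvAll :: "nat \<Rightarrow> nat \<Rightarrow> pt set \<Rightarrow> pt set" where
  "EvAll m n = togS m n {x \<in> Pmn m n. even (rk x)}"
definition OdAll :: "nat \<Rightarrow> nat \<Rightarrow> pt set \<Rightarrow> pt set" where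
  "OdAll m n = togS m n {x \<in> Pmn m n. odd (rk x)}"

lemma WtR: "Wt m n (m+n) (m+n) = OdAll m n \<circ> EvAll m n"
proof -
  have "{x \<in> Pmn m n. odd (rk x) \<and> rk x \<le> m+n} = {x \<in> Pmn m n. odd (rk x)}"
    using rk_le by blast
  moreover have "{x \<in> Pmn m n. even (rk x) \<and> rk x \<le> m+n} = {x \<in> Pmn m n. even (rk x)}"
    using rk_le by blast
  ultimately show ?thesis unfolding Wt_def Od_def Ev_def OdAll_def EvAll_def by simp
qed

theorem toggle_conj:
  "\<exists>C. bij_betw C (order_ideals m n) (order_ideals m n) \<and>
     (\<forall>Y \<in> order_ideals m n. OdAll m n (EvAll m n (C Y)) = C (rowmotion m n Y))"
proof -
  obtain C where C: "bij_betw C (order_ideals m n) (order_ideals m n)"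
    "\<forall>Y. Wt m n (m+n) (m+n) (C Y) = C (Wt m n (m+n) 0 Y)"
    using Wt_conj[of "m+n" "m+n" m n] by auto
  show ?thesis
    by (rule exI[of _ C]) (use C WtR Wt0 Row_compl in auto)
qed



type_synonym edge = "(nat \<times> nat) set"

definition Ve :: "nat \<Rightarrow> nat \<Rightarrow> edge" where "Ve i j = {(i,j),(Suc i,j)}"
definition He :: "nat \<Rightarrow> nat \<Rightarrow> edge" where "He i j = {(i,j),(i,Suc j)}"

lemma Ve_eq[simp]: "Ve i j = Ve i' j' \<longleftrightarrow> i = i' \<and> j = j'"
  by (auto simp: Ve_def doubleton_eq_iff)
lemma He_eq[simp]: "He i j = He i' j' \<longleftrightarrow> i = i' \<and> j = j'"
  by (auto simp: He_def doubleton_eq_iff)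
lemma Ve_He[simp]: "Ve i j \<noteq> He i' j'" "He i' j' \<noteq> Ve i j"
  by (auto simp: Ve_def He_def doubleton_eq_iff)

lemma Gedges_eq: "Gedges m n = {Ve i j | i j. i \<le> m \<and> 1 \<le> j \<and> j \<le> n} \<union> {He i j | i j. 1 \<le> i \<and> i \<le> m \<and> j \<le> n}"
  by (simp add: Gedges_def Ve_def He_def)

lemma Ve_G[simp]: "Ve i j \<in> Gedges m n \<longleftrightarrow> i \<le> m \<and> 1 \<le> j \<and> j \<le> n"
  by (auto simp: Gedges_eq)
lemma He_G[simp]: "He i j \<in> Gedges m n \<longleftrightarrow> 1 \<le> i \<and> i \<le> m \<and> j \<le> n"
  by (auto simp: Gedges_eq)

lemma edges_at:
  assumes "e \<in> Gedges m n" "(Suc a, Suc b) \<in> e"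
  shows "e \<in> {Ve a (Suc b), Ve (Suc a) (Suc b), He (Suc a) b, He (Suc a) (Suc b)}"
proof -
  from assms(1) consider (V) i j where "e = Ve i j" | (H) i j where "e = He i j"
    unfolding Gedges_eq by blast
  then show ?thesis
  proof cases
    case V
    then have "(Suc a, Suc b) = (i,j) \<or> (Suc a, Suc b) = (Suc i, j)" using assms(2) by (simp add: Ve_def)
    then show ?thesis using V by auto
  next
    case H
    then have "(Suc a, Suc b) = (i,j) \<or> (Suc a, Suc b) = (i, Suc j)" using assms(2) by (simp add: He_def)
    then show ?thesis using H by auto
  qed
qed

lemma card4:
  assumes "distinct [w,x,y,z]"
  shows "card ({w,x,y,z} \<inter> F) = of_bool (w \<in> F) + of_bool (x \<in> F) + of_bool (y \<in> F) + of_bool (z \<in> F)"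
proof -
  have "(\<Sum>a\<in>{w,x,y,z}. of_bool (a \<in> F)::nat) = card ({w,x,y,z} \<inter> F)"
    by (subst sum_of_bool_eq) auto
  moreover have "(\<Sum>a\<in>{w,x,y,z}. of_bool (a \<in> F)::nat) = of_bool (w \<in> F) + of_bool (x \<in> F) + of_bool (y \<in> F) + of_bool (z \<in> F)"
    using assms by simp
  ultimately show ?thesis by simp
qed

lemma deg_eq:
  assumes "F \<subseteq> Gedges m n"
  shows "card {e \<in> F. (Suc a, Suc b) \<in> e} =
    of_bool (Ve a (Suc b) \<in> F) + of_bool (Ve (Suc a) (Suc b) \<in> F) + of_bool (He (Suc a) b \<in> F) + of_bool (He (Suc a) (Suc b) \<in> F)"
proof -
  have "{e \<in> F. (Suc a, Suc b) \<in> e} = {Ve a (Suc b), Ve (Suc a) (Suc b), He (Suc a) b, He (Suc a) (Suc b)} \<inter> F"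
  proof (rule set_eqI)
    fix e
    have mem: "(Suc a, Suc b) \<in> Ve a (Suc b)" "(Suc a, Suc b) \<in> Ve (Suc a) (Suc b)"
      "(Suc a, Suc b) \<in> He (Suc a) b" "(Suc a, Suc b) \<in> He (Suc a) (Suc b)"
      by (auto simp: Ve_def He_def)
    show "e \<in> {e \<in> F. (Suc a, Suc b) \<in> e} \<longleftrightarrow> e \<in> {Ve a (Suc b), Ve (Suc a) (Suc b), He (Suc a) b, He (Suc a) (Suc b)} \<inter> F"
    proof
      assume "e \<in> {e \<in> F. (Suc a, Suc b) \<in> e}"
      then show "e \<in> {Ve a (Suc b), Ve (Suc a) (Suc b), He (Suc a) b, He (Suc a) (Suc b)} \<inter> F"
        using edges_at[of e m n a b] assms by blast
    next
      assume "e \<in> {Ve a (Suc b), Ve (Suc a) (Suc b), He (Suc a) b, He (Suc a) (Suc b)} \<inter> F"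
      then show "e \<in> {e \<in> F. (Suc a, Suc b) \<in> e}" using mem by blast
    qed
  qed
  then show ?thesis by (simp add: card4)
qed

definition bH :: "edge set \<Rightarrow> nat \<Rightarrow> nat \<Rightarrow> bool" where
  "bH F i j \<longleftrightarrow> (He i j \<in> F) \<noteq> even (i + j)"
definition bV :: "edge set \<Rightarrow> nat \<Rightarrow> nat \<Rightarrow> bool" where
  "bV F i j \<longleftrightarrow> (Ve i j \<in> F) \<noteq> odd (i + j)"

primrec hgt :: "edge set \<Rightarrow> nat \<Rightarrow> nat \<Rightarrow> nat" where
  "hgt F 0 j = 0"
| "hgt F (Suc i) j = hgt F i j + of_bool (bH F (Suc i) j)"

definition Hval :: "nat \<Rightarrow> nat \<Rightarrow> (nat \<Rightarrow> nat \<Rightarrow> nat) \<Rightarrow> bool" where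
  "Hval m n h \<longleftrightarrow> (\<forall>j \<le> n. h 0 j = 0) \<and> (\<forall>i \<le> m. h i 0 = 0)
     \<and> (\<forall>i < m. \<forall>j \<le> n. h i j \<le> h (Suc i) j \<and> h (Suc i) j \<le> Suc (h i j))
     \<and> (\<forall>i \<le> m. \<forall>j < n. h i j \<le> h i (Suc j) \<and> h i (Suc j) \<le> Suc (h i j))"

definition Fh :: "nat \<Rightarrow> nat \<Rightarrow> (nat \<Rightarrow> nat \<Rightarrow> nat) \<Rightarrow> edge set" where
  "Fh m n h = {Ve i j | i j. i \<le> m \<and> 1 \<le> j \<and> j \<le> n \<and> ((h i j \<noteq> h i (j-1)) \<noteq> odd (i+j))}
     \<union> {He i j | i j. 1 \<le> i \<and> i \<le> m \<and> j \<le> n \<and> ((h i j \<noteq> h (i-1) j) \<noteq> even (i+j))}"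

lemma Ve_Fh: "Ve i j \<in> Fh m n h \<longleftrightarrow> i \<le> m \<and> 1 \<le> j \<and> j \<le> n \<and> ((h i j \<noteq> h i (j-1)) \<noteq> odd (i+j))"
  by (auto simp: Fh_def)
lemma He_Fh: "He i j \<in> Fh m n h \<longleftrightarrow> 1 \<le> i \<and> i \<le> m \<and> j \<le> n \<and> ((h i j \<noteq> h (i-1) j) \<noteq> even (i+j))"
  by (auto simp: Fh_def)

lemma Fh_G: "Fh m n h \<subseteq> Gedges m n"
  by (auto simp: Fh_def)

lemma PFPL_D:
  assumes "F \<in> PFPL m n"
  shows "F \<subseteq> Gedges m n"
    "\<And>a b. a < m \<Longrightarrow> b < n \<Longrightarrow> of_bool (Ve a (Suc b) \<in> F) + of_bool (Ve (Suc a) (Suc b) \<in> F) + of_bool (He (Suc a) b \<in> F) + of_bool (He (Suc a) (Suc b) \<in> F) = (2::nat)"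
    "\<And>j. 1 \<le> j \<Longrightarrow> j \<le> n \<Longrightarrow> Ve 0 j \<in> F \<longleftrightarrow> odd j"
    "\<And>i. 1 \<le> i \<Longrightarrow> i \<le> m \<Longrightarrow> He i 0 \<in> F \<longleftrightarrow> even i"
proof -
  show G: "F \<subseteq> Gedges m n" using assms by (simp add: PFPL_def)
  show "\<And>j. 1 \<le> j \<Longrightarrow> j \<le> n \<Longrightarrow> Ve 0 j \<in> F \<longleftrightarrow> odd j"
    using assms by (simp add: PFPL_def Ve_def)
  show "\<And>i. 1 \<le> i \<Longrightarrow> i \<le> m \<Longrightarrow> He i 0 \<in> F \<longleftrightarrow> even i"
    using assms by (simp add: PFPL_def He_def)
  fix a b assume ab: "a < m" "b < n"
  have "(Suc a, Suc b) \<in> Gverts m n" "interior m n (Suc a, Suc b)"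
    using ab by (auto simp: Gverts_def interior_def)
  then have "card {e \<in> F. (Suc a, Suc b) \<in> e} = 2" using assms by (simp add: PFPL_def)
  then show "of_bool (Ve a (Suc b) \<in> F) + of_bool (Ve (Suc a) (Suc b) \<in> F) + of_bool (He (Suc a) b \<in> F) + of_bool (He (Suc a) (Suc b) \<in> F) = (2::nat)"
    using deg_eq[OF G] by simp
qed

lemma PFPL_I:
  assumes "F \<subseteq> Gedges m n"
    "\<And>a b. a < m \<Longrightarrow> b < n \<Longrightarrow> of_bool (Ve a (Suc b) \<in> F) + of_bool (Ve (Suc a) (Suc b) \<in> F) + of_bool (He (Suc a) b \<in> F) + of_bool (He (Suc a) (Suc b) \<in> F) = (2::nat)"
    "\<And>j. 1 \<le> j \<Longrightarrow> j \<le> n \<Longrightarrow> Ve 0 j \<in> F \<longleftrightarrow> odd j"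
    "\<And>i. 1 \<le> i \<Longrightarrow> i \<le> m \<Longrightarrow> He i 0 \<in> F \<longleftrightarrow> even i"
  shows "F \<in> PFPL m n"
proof -
  have "card {e \<in> F. v \<in> e} = 2" if "v \<in> Gverts m n" "interior m n v" for v
  proof -
    obtain i j where ij: "v = (i,j)" by (cases v)
    have r: "1 \<le> i" "i \<le> m" "1 \<le> j" "j \<le> n" using that ij by (auto simp: interior_def)
    obtain a b where v: "v = (Suc a, Suc b)" "a < m" "b < n"
      using r ij by (cases i; cases j) auto
    show ?thesis using deg_eq[OF assms(1)] assms(2)[OF v(2,3)] v(1) by simp
  qed
  moreover have "\<forall>j. 1 \<le> j \<and> j \<le> n \<longrightarrow> ({(0,j),(1,j)} \<in> F \<longleftrightarrow> odd j)"
    using assms(3) by (simp add: Ve_def)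
  moreover have "\<forall>i. 1 \<le> i \<and> i \<le> m \<longrightarrow> ({(i,0),(i,1)} \<in> F \<longleftrightarrow> even i)"
    using assms(4) by (simp add: He_def)
  ultimately show ?thesis using assms(1) by (simp add: PFPL_def)
qed

lemma boolar:
  "of_bool u + of_bool d + of_bool l + of_bool r = (2::nat) \<Longrightarrow>
   of_bool (u \<noteq> p) + of_bool (r \<noteq> p) = (of_bool (l \<noteq> (\<not>p)) + of_bool (d \<noteq> (\<not>p)) :: nat)"
  by (cases p; cases u; cases d; cases l; cases r) simp_all

lemma hgt_row:
  assumes F: "F \<in> PFPL m n" and "i \<le> m" "b < n"
  shows "hgt F i (Suc b) = hgt F i b + of_bool (bV F i (Suc b))"
  using assms(2)
proof (induction i)
  case 0
  then show ?case using PFPL_D(3)[OF F, of "Suc b"] assms(3) by (simp add: bV_def)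
next
  case (Suc i)
  have d: "of_bool (Ve i (Suc b) \<in> F) + of_bool (Ve (Suc i) (Suc b) \<in> F) + of_bool (He (Suc i) b \<in> F) + of_bool (He (Suc i) (Suc b) \<in> F) = (2::nat)"
    using PFPL_D(2)[OF F, of i b] Suc.prems assms(3) by simp
  have "of_bool (bV F i (Suc b)) + of_bool (bH F (Suc i) (Suc b)) = (of_bool (bH F (Suc i) b) + of_bool (bV F (Suc i) (Suc b)) :: nat)"
    using d unfolding bV_def bH_def
    using boolar[OF d, of "even (i+b)"] unfolding bV_def bH_def by simp
  then show ?case using Suc by simp
qed

lemma hgt_col0:
  assumes F: "F \<in> PFPL m n" and "i \<le> m"
  shows "hgt F i 0 = 0"
  using assms(2) by (induction i) (use PFPL_D(4)[OF F] in \<open>auto simp: bH_def\<close>)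

lemma Hval_hgt:
  assumes F: "F \<in> PFPL m n"
  shows "Hval m n (hgt F)"
  unfolding Hval_def using hgt_col0[OF F] hgt_row[OF F] by auto

lemma Fh_hgt:
  assumes F: "F \<in> PFPL m n"
  shows "Fh m n (hgt F) = F"
proof (rule set_eqI)
  fix e
  have G: "F \<subseteq> Gedges m n" using PFPL_D(1)[OF F] .
  have V: "Ve i j \<in> Fh m n (hgt F) \<longleftrightarrow> Ve i j \<in> F" if ij: "i \<le> m" "1 \<le> j" "j \<le> n" for i j
  proof -
    obtain b where b: "j = Suc b" using ij by (cases j) auto
    show ?thesis using hgt_row[OF F, of i b] ij b unfolding Ve_Fh bV_def by auto
  qed
  have H: "He i j \<in> Fh m n (hgt F) \<longleftrightarrow> He i j \<in> F" if ij: "1 \<le> i" "i \<le> m" "j \<le> n" for i j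
  proof -
    obtain a where a: "i = Suc a" using ij by (cases i) auto
    show ?thesis using ij a by (auto simp: He_Fh bH_def)
  qed
  show "e \<in> Fh m n (hgt F) \<longleftrightarrow> e \<in> F"
  proof
    assume "e \<in> Fh m n (hgt F)"
    then have "e \<in> Gedges m n" using Fh_G by blast
    then show "e \<in> F" using V H \<open>e \<in> Fh m n (hgt F)\<close> unfolding Gedges_eq by blast
  next
    assume "e \<in> F"
    then have "e \<in> Gedges m n" using G by blast
    then show "e \<in> Fh m n (hgt F)" using V H \<open>e \<in> F\<close> unfolding Gedges_eq by blast
  qed
qed

lemma natar:
  fixes w x y z :: nat
  assumes "w \<le> x" "x \<le> Suc w" "y \<le> z" "z \<le> Suc y" "w \<le> y" "y \<le> Suc w" "x \<le> z" "z \<le> Suc x"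
  shows "of_bool ((x \<noteq> w) \<noteq> p) + of_bool ((z \<noteq> y) \<noteq> (\<not>p)) + of_bool ((y \<noteq> w) \<noteq> (\<not>p)) + of_bool ((z \<noteq> x) \<noteq> p) = (2::nat)"
proof -
  have "x = w \<or> x = Suc w" "y = w \<or> y = Suc w" using assms by auto
  then show ?thesis using assms by (cases p) auto
qed

lemma Fh_PFPL:
  assumes h: "Hval m n h"
  shows "Fh m n h \<in> PFPL m n"
proof (rule PFPL_I)
  show "Fh m n h \<subseteq> Gedges m n" by (rule Fh_G)
next
  fix a b assume ab: "a < m" "b < n"
  have b1: "h a b \<le> h a (Suc b)" "h a (Suc b) \<le> Suc (h a b)"
    "h (Suc a) b \<le> h (Suc a) (Suc b)" "h (Suc a) (Suc b) \<le> Suc (h (Suc a) b)"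
    "h a b \<le> h (Suc a) b" "h (Suc a) b \<le> Suc (h a b)"
    "h a (Suc b) \<le> h (Suc a) (Suc b)" "h (Suc a) (Suc b) \<le> Suc (h a (Suc b))"
    using h ab unfolding Hval_def by auto
  have e1: "Ve a (Suc b) \<in> Fh m n h \<longleftrightarrow> (h a (Suc b) \<noteq> h a b) \<noteq> even (a+b)"
    using ab by (simp add: Ve_Fh)
  have e2: "Ve (Suc a) (Suc b) \<in> Fh m n h \<longleftrightarrow> (h (Suc a) (Suc b) \<noteq> h (Suc a) b) \<noteq> (\<not> even (a+b))"
    using ab by (simp add: Ve_Fh)
  have e3: "He (Suc a) b \<in> Fh m n h \<longleftrightarrow> (h (Suc a) b \<noteq> h a b) \<noteq> (\<not> even (a+b))"
    using ab by (simp add: He_Fh)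
  have e4: "He (Suc a) (Suc b) \<in> Fh m n h \<longleftrightarrow> (h (Suc a) (Suc b) \<noteq> h a (Suc b)) \<noteq> even (a+b)"
    using ab by (simp add: He_Fh)
  show "of_bool (Ve a (Suc b) \<in> Fh m n h) + of_bool (Ve (Suc a) (Suc b) \<in> Fh m n h) +
        of_bool (He (Suc a) b \<in> Fh m n h) + of_bool (He (Suc a) (Suc b) \<in> Fh m n h) = (2::nat)"
    unfolding e1 e2 e3 e4 by (rule natar) (use b1 in auto)
next
  fix j assume "1 \<le> j" "j \<le> n"
  then show "Ve 0 j \<in> Fh m n h \<longleftrightarrow> odd j" using h unfolding Ve_Fh Hval_def by auto
next
  fix i assume "1 \<le> i" "i \<le> m"
  then show "He i 0 \<in> Fh m n h \<longleftrightarrow> even i" using h unfolding He_Fh Hval_def by auto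
qed

lemma hgt_Fh:
  assumes h: "Hval m n h" and "i \<le> m" "j \<le> n"
  shows "hgt (Fh m n h) i j = h i j"
  using assms(2)
proof (induction i)
  case 0 then show ?case using h assms(3) by (simp add: Hval_def)
next
  case (Suc i)
  have "h i j \<le> h (Suc i) j" "h (Suc i) j \<le> Suc (h i j)" using h Suc.prems assms(3) by (auto simp: Hval_def)
  then show ?case using Suc assms(3) by (auto simp: bH_def He_Fh)
qed

lemma Fh_cong:
  assumes "\<And>i j. i \<le> m \<Longrightarrow> j \<le> n \<Longrightarrow> h i j = h' i j"
  shows "Fh m n h = Fh m n h'"
proof -
  have eq1: "\<And>i j. i \<le> m \<Longrightarrow> j \<le> n \<Longrightarrow> h i (j-1) = h' i (j-1)"
    using assms by auto
  have eq2: "\<And>i j. i \<le> m \<Longrightarrow> j \<le> n \<Longrightarrow> h (i-1) j = h' (i-1) j"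
    using assms by auto
  show ?thesis unfolding Fh_def using assms eq1 eq2 by auto
qed



lemma P_nat: "(int a, int b, int k) \<in> Pmn m n \<longleftrightarrow> k \<le> a \<and> k \<le> b \<and> a < m \<and> b < n"
  by (auto simp: Pmn_def)

lemma P_elem: "x \<in> Pmn m n \<Longrightarrow> \<exists>a b k. x = (int a, int b, int k)"
  by (cases x) (auto simp: Pmn_def intro!: exI[of _ "nat _"])

lemma cov_nat:
  "((int a', int b', int k'), (int a, int b, int k)) \<in> cover_rel m n \<longleftrightarrow>
    (int a', int b', int k') \<in> Pmn m n \<and> (int a, int b, int k) \<in> Pmn m n \<and>
    ((a' = Suc a \<and> b' = b \<and> k' = k) \<or> (a' = a \<and> b' = Suc b \<and> k' = k) \<or>
     (Suc a' = a \<and> b' = b \<and> Suc k' = k) \<or> (a' = a \<and> Suc b' = b \<and> Suc k' = k))"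
  unfolding cover_rel_def by auto

definition Xh :: "nat \<Rightarrow> nat \<Rightarrow> (nat \<Rightarrow> nat \<Rightarrow> nat) \<Rightarrow> pt set" where
  "Xh m n h = {x \<in> Pmn m n. snd (snd x) < int (h (Suc (nat (fst x))) (Suc (nat (fst (snd x)))))}"

lemma Xh_nat: "(int a, int b, int k) \<in> Xh m n h \<longleftrightarrow> k \<le> a \<and> k \<le> b \<and> a < m \<and> b < n \<and> k < h (Suc a) (Suc b)"
  by (auto simp: Xh_def P_nat)

lemma Xh_sub: "Xh m n h \<subseteq> Pmn m n"
  by (auto simp: Xh_def)

lemma Hval_col: "Hval m n h \<Longrightarrow> i < m \<Longrightarrow> j \<le> n \<Longrightarrow> h i j \<le> h (Suc i) j \<and> h (Suc i) j \<le> Suc (h i j)"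
  by (simp add: Hval_def)
lemma Hval_row: "Hval m n h \<Longrightarrow> i \<le> m \<Longrightarrow> j < n \<Longrightarrow> h i j \<le> h i (Suc j) \<and> h i (Suc j) \<le> Suc (h i j)"
  by (simp add: Hval_def)

lemma Hval_bound:
  assumes h: "Hval m n h" and "i \<le> m" "j \<le> n"
  shows "h i j \<le> i" "h i j \<le> j"
proof -
  show "h i j \<le> i" using assms(2)
  proof (induction i)
    case 0 then show ?case using h assms(3) by (simp add: Hval_def)
  next
    case (Suc i) then show ?case using Hval_col[OF h, of i j] assms(3) by simp
  qed
  show "h i j \<le> j" using assms(3)
  proof (induction j)
    case 0 then show ?case using h assms(2) by (simp add: Hval_def)
  next
    case (Suc j) then show ?case using Hval_row[OF h, of i j] assms(2) by simp
  qed
qed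

lemma Xh_ideal:
  assumes h: "Hval m n h"
  shows "Xh m n h \<in> order_ideals m n"
  unfolding ideal_iff_cover
proof (intro conjI allI impI)
  show "Xh m n h \<subseteq> Pmn m n" by (rule Xh_sub)
next
  fix x w assume x: "x \<in> Xh m n h" and c: "(w,x) \<in> cover_rel m n"
  obtain a b k where xe: "x = (int a, int b, int k)" using P_elem cover_relD(1)[OF c] by blast
  obtain a' b' k' where we: "w = (int a', int b', int k')" using P_elem cover_relD(2)[OF c] by blast
  have c': "((int a', int b', int k'), (int a, int b, int k)) \<in> cover_rel m n" using c xe we by simp
  have xx: "k \<le> a" "k \<le> b" "a < m" "b < n" "k < h (Suc a) (Suc b)" using x xe Xh_nat by auto
  have wP: "k' \<le> a'" "k' \<le> b'" "a' < m" "b' < n" using c' unfolding cov_nat P_nat by auto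
  have "k' < h (Suc a') (Suc b')"
    using c' unfolding cov_nat
  proof (elim conjE disjE)
    assume "a' = Suc a" "b' = b" "k' = k"
    then show ?thesis using Hval_col[OF h, of "Suc a" "Suc b"] xx wP by simp
  next
    assume "a' = a" "b' = Suc b" "k' = k"
    then show ?thesis using Hval_row[OF h, of "Suc a" "Suc b"] xx wP by simp
  next
    assume "Suc a' = a" "b' = b" "Suc k' = k"
    then show ?thesis using Hval_col[OF h, of a "Suc b"] xx wP by simp
  next
    assume "a' = a" "Suc b' = b" "Suc k' = k"
    then show ?thesis using Hval_row[OF h, of "Suc a" b] xx wP by simp
  qed
  then show "w \<in> Xh m n h" using we wP Xh_nat by simp
qed

lemma nat_eq_by_less: "(\<And>k::nat. k < x \<longleftrightarrow> k < y) \<Longrightarrow> x = y"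
  by (metis less_irrefl nat_neq_iff)

lemma Xh_inj:
  assumes h: "Hval m n h" and h': "Hval m n h'" and eq: "Xh m n h = Xh m n h'"
    and "i \<le> m" "j \<le> n"
  shows "h i j = h' i j"
proof (cases "i = 0 \<or> j = 0")
  case True then show ?thesis using h h' assms(4,5) by (auto simp: Hval_def)
next
  case False
  then obtain a b where ab: "i = Suc a" "j = Suc b" by (cases i; cases j) auto
  show ?thesis
  proof (rule nat_eq_by_less)
    fix k
    have "k < h i j \<longleftrightarrow> (int a, int b, int k) \<in> Xh m n h"
      using Hval_bound[OF h assms(4,5)] ab assms(4,5) by (auto simp: Xh_nat)
    moreover have "k < h' i j \<longleftrightarrow> (int a, int b, int k) \<in> Xh m n h'"
      using Hval_bound[OF h' assms(4,5)] ab assms(4,5) by (auto simp: Xh_nat)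
    ultimately show "k < h i j \<longleftrightarrow> k < h' i j" using eq by simp
  qed
qed

lemma Xh_cong:
  assumes "\<And>i j. 1 \<le> i \<Longrightarrow> i \<le> m \<Longrightarrow> 1 \<le> j \<Longrightarrow> j \<le> n \<Longrightarrow> h i j = h' i j"
  shows "Xh m n h = Xh m n h'"
proof (rule set_eqI)
  fix x
  show "x \<in> Xh m n h \<longleftrightarrow> x \<in> Xh m n h'"
  proof (cases "x \<in> Pmn m n")
    case True
    then obtain a b k where xe: "x = (int a, int b, int k)" using P_elem by blast
    then show ?thesis using assms[of "Suc a" "Suc b"] by (auto simp: Xh_nat)
  next
    case False then show ?thesis using Xh_sub by blast
  qed
qed

lemma ideal_cover:
  assumes "X \<in> order_ideals m n" "x \<in> X" "(w,x) \<in> cover_rel m n"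
  shows "w \<in> X"
  using assms unfolding ideal_iff_cover by blast

lemma fib_down1:
  assumes X: "X \<in> order_ideals m n" and x: "(int a, int b, int (Suc k)) \<in> X"
  shows "(int a, int b, int k) \<in> X"
proof -
  have xP: "(int a, int b, int (Suc k)) \<in> Pmn m n" using X x by (auto simp: order_ideals_def)
  have xP': "Suc k \<le> a" "Suc k \<le> b" "a < m" "b < n" using xP unfolding P_nat by auto
  then obtain a0 where a0: "a = Suc a0" by (cases a) auto
  have c1: "((int a0, int b, int k), (int a, int b, int (Suc k))) \<in> cover_rel m n"
    unfolding cov_nat P_nat using xP' a0 by simp
  have c2: "((int a, int b, int k), (int a0, int b, int k)) \<in> cover_rel m n"
    unfolding cov_nat P_nat using xP' a0 by simp
  show ?thesis using ideal_cover[OF X ideal_cover[OF X x c1] c2] .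
qed

lemma fib_down:
  assumes X: "X \<in> order_ideals m n" and x: "(int a, int b, int k) \<in> X" and "k' \<le> k"
  shows "(int a, int b, int k') \<in> X"
  using assms(3) x
proof (induction k)
  case 0 then show ?case by simp
next
  case (Suc k)
  then show ?case using fib_down1[OF X] by (metis le_Suc_eq)
qed

lemma downset_nat:
  fixes S :: "nat set"
  assumes "finite S" "\<And>k k'. k \<in> S \<Longrightarrow> k' \<le> k \<Longrightarrow> k' \<in> S"
  shows "S = {..<card S}"
proof (cases "S = {}")
  case True then show ?thesis by simp
next
  case False
  let ?M = "Max S"
  have M: "?M \<in> S" using Max_in[OF assms(1) False] .
  have "S = {..?M}"
    using assms(1) Max_ge assms(2)[OF M] by auto
  moreover have "card S = Suc ?M" using \<open>S = {..?M}\<close> by (metis card_atMost)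
  ultimately show ?thesis by (simp add: lessThan_Suc_atMost)
qed

definition hX :: "pt set \<Rightarrow> nat \<Rightarrow> nat \<Rightarrow> nat" where
  "hX X i j = card {k. (int i - 1, int j - 1, int k) \<in> X}"

lemma memX:
  assumes X: "X \<in> order_ideals m n"
  shows "(int a, int b, int k) \<in> X \<longleftrightarrow> k < hX X (Suc a) (Suc b)"
proof -
  let ?S = "{k. (int a, int b, int k) \<in> X}"
  have XP: "X \<subseteq> Pmn m n" using X by (auto simp: order_ideals_def)
  have "?S \<subseteq> {..a}" using XP by (auto simp: P_nat)
  then have fin: "finite ?S" using finite_subset by blast
  have "?S = {..<card ?S}"
    by (rule downset_nat[OF fin]) (use fib_down[OF X] in blast)
  moreover have "hX X (Suc a) (Suc b) = card ?S" by (simp add: hX_def)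
  ultimately show ?thesis by (metis (no_types, lifting) lessThan_iff mem_Collect_eq)
qed

lemma hX0:
  assumes X: "X \<in> order_ideals m n"
  shows "hX X 0 j = 0" "hX X i 0 = 0"
proof -
  have XP: "X \<subseteq> Pmn m n" using X by (auto simp: order_ideals_def)
  have "{k. (int 0 - 1, int j - 1, int k) \<in> X} = {}" using XP by (auto simp: Pmn_def)
  then show "hX X 0 j = 0" by (simp add: hX_def)
  have "{k. (int i - 1, int 0 - 1, int k) \<in> X} = {}" using XP by (auto simp: Pmn_def)
  then show "hX X i 0 = 0" by (simp add: hX_def)
qed

lemma le_by_less: "(\<And>k::nat. k < x \<Longrightarrow> k < y) \<Longrightarrow> x \<le> y"
  using not_le by blast
lemma le_Suc_by_less: "(\<And>k::nat. Suc k < x \<Longrightarrow> k < y) \<Longrightarrow> x \<le> Suc y"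
proof (rule ccontr)
  assume a: "(\<And>k::nat. Suc k < x \<Longrightarrow> k < y)" "\<not> x \<le> Suc y"
  then have "Suc y < x" by simp
  then show False using a(1)[of y] by simp
qed

lemma Hval_hX:
  assumes X: "X \<in> order_ideals m n"
  shows "Hval m n (hX X)"
proof -
  have XP: "X \<subseteq> Pmn m n" using X by (auto simp: order_ideals_def)
  have col: "hX X i j \<le> hX X (Suc i) j \<and> hX X (Suc i) j \<le> Suc (hX X i j)" if ij: "i < m" "j \<le> n" for i j
  proof (cases j)
    case 0 then show ?thesis using hX0[OF X] by simp
  next
    case (Suc b)
    show ?thesis
    proof (cases i)
      case 0
      have "hX X (Suc 0) j \<le> Suc 0"
      proof (rule le_Suc_by_less)
        fix k assume "Suc k < hX X (Suc 0) j"
        then have "(int 0, int b, int (Suc k)) \<in> X" using memX[OF X, of 0 b "Suc k"] Suc by simp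
        then have "(int 0, int b, int (Suc k)) \<in> Pmn m n" using XP by blast
        then show "k < 0" unfolding P_nat by simp
      qed
      then show ?thesis using 0 hX0[OF X] by simp
    next
      case (Suc a)
      have "hX X i j \<le> hX X (Suc i) j"
      proof (rule le_by_less)
        fix k assume "k < hX X i j"
        then have k: "(int a, int b, int k) \<in> X" using memX[OF X, of a b k] Suc \<open>j = Suc b\<close> by simp
        then have "(int a, int b, int k) \<in> Pmn m n" using XP by blast
        then have "((int (Suc a), int b, int k), (int a, int b, int k)) \<in> cover_rel m n"
          using ij Suc by (unfold cov_nat P_nat, auto simp: P_nat)
        then have "(int (Suc a), int b, int k) \<in> X" using ideal_cover[OF X k] by blast
        then show "k < hX X (Suc i) j" using memX[OF X, of "Suc a" b k] Suc \<open>j = Suc b\<close> by simp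
      qed
      moreover have "hX X (Suc i) j \<le> Suc (hX X i j)"
      proof (rule le_Suc_by_less)
        fix k assume "Suc k < hX X (Suc i) j"
        then have k: "(int (Suc a), int b, int (Suc k)) \<in> X" using memX[OF X, of "Suc a" b "Suc k"] Suc \<open>j = Suc b\<close> by simp
        then have "(int (Suc a), int b, int (Suc k)) \<in> Pmn m n" using XP by blast
        then have "((int a, int b, int k), (int (Suc a), int b, int (Suc k))) \<in> cover_rel m n"
          by (unfold cov_nat P_nat, auto simp: P_nat)
        then have "(int a, int b, int k) \<in> X" using ideal_cover[OF X k] by blast
        then show "k < hX X i j" using memX[OF X, of a b k] Suc \<open>j = Suc b\<close> by simp
      qed
      ultimately show ?thesis by simp
    qed
  qed
  have row: "hX X i j \<le> hX X i (Suc j) \<and> hX X i (Suc j) \<le> Suc (hX X i j)" if ij: "i \<le> m" "j < n" for i j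
  proof (cases i)
    case 0 then show ?thesis using hX0[OF X] by simp
  next
    case (Suc a)
    show ?thesis
    proof (cases j)
      case 0
      have "hX X i (Suc 0) \<le> Suc 0"
      proof (rule le_Suc_by_less)
        fix k assume "Suc k < hX X i (Suc 0)"
        then have "(int a, int 0, int (Suc k)) \<in> X" using memX[OF X, of a 0 "Suc k"] Suc by simp
        then have "(int a, int 0, int (Suc k)) \<in> Pmn m n" using XP by blast
        then show "k < 0" unfolding P_nat by simp
      qed
      then show ?thesis using 0 hX0[OF X] by simp
    next
      case (Suc b)
      have "hX X i j \<le> hX X i (Suc j)"
      proof (rule le_by_less)
        fix k assume "k < hX X i j"
        then have k: "(int a, int b, int k) \<in> X" using memX[OF X, of a b k] Suc \<open>i = Suc a\<close> by simp
        then have "(int a, int b, int k) \<in> Pmn m n" using XP by blast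
        then have "((int a, int (Suc b), int k), (int a, int b, int k)) \<in> cover_rel m n"
          using ij Suc by (unfold cov_nat P_nat, auto simp: P_nat)
        then have "(int a, int (Suc b), int k) \<in> X" using ideal_cover[OF X k] by blast
        then show "k < hX X i (Suc j)" using memX[OF X, of a "Suc b" k] Suc \<open>i = Suc a\<close> by simp
      qed
      moreover have "hX X i (Suc j) \<le> Suc (hX X i j)"
      proof (rule le_Suc_by_less)
        fix k assume "Suc k < hX X i (Suc j)"
        then have k: "(int a, int (Suc b), int (Suc k)) \<in> X" using memX[OF X, of a "Suc b" "Suc k"] Suc \<open>i = Suc a\<close> by simp
        then have "(int a, int (Suc b), int (Suc k)) \<in> Pmn m n" using XP by blast
        then have "((int a, int b, int k), (int a, int (Suc b), int (Suc k))) \<in> cover_rel m n"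
          by (unfold cov_nat P_nat, auto simp: P_nat)
        then have "(int a, int b, int k) \<in> X" using ideal_cover[OF X k] by blast
        then show "k < hX X i j" using memX[OF X, of a b k] Suc \<open>i = Suc a\<close> by simp
      qed
      ultimately show ?thesis by simp
    qed
  qed
  show ?thesis unfolding Hval_def using hX0[OF X] col row by auto
qed

lemma X_Xh:
  assumes X: "X \<in> order_ideals m n"
  shows "X = Xh m n (hX X)"
proof (rule set_eqI)
  fix x
  have XP: "X \<subseteq> Pmn m n" using X by (auto simp: order_ideals_def)
  show "x \<in> X \<longleftrightarrow> x \<in> Xh m n (hX X)"
  proof (cases "x \<in> Pmn m n")
    case True
    then obtain a b k where xe: "x = (int a, int b, int k)" using P_elem by blast
    then show ?thesis using True memX[OF X, of a b k] by (auto simp: Xh_nat P_nat)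
  next
    case False then show ?thesis using XP Xh_sub by blast
  qed
qed



definition swpb :: "'a \<Rightarrow> 'a \<Rightarrow> 'a \<Rightarrow> 'a" where
  "swpb A B z = (if z = A then B else if z = B then A else z)"

lemma swpb_sym: "swpb A B = swpb B A"
  by (auto simp: swpb_def fun_eq_iff)

definition patA :: "bool \<Rightarrow> bool \<Rightarrow> bool \<Rightarrow> bool \<times> bool \<times> bool \<times> bool" where
  "patA ev im jn = (ev, im \<and> ev, \<not> ev, jn \<and> \<not> ev)"
definition patB :: "bool \<Rightarrow> bool \<Rightarrow> bool \<Rightarrow> bool \<times> bool \<times> bool \<times> bool" where
  "patB ev im jn = (\<not> ev, im \<and> \<not> ev, ev, jn \<and> ev)"

definition bits :: "bool \<Rightarrow> bool \<Rightarrow> bool \<Rightarrow> nat \<Rightarrow> nat \<Rightarrow> nat \<Rightarrow> nat \<Rightarrow> nat \<Rightarrow> bool \<times> bool \<times> bool \<times> bool" where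
  "bits ev im jn nN nW nS nE c = ((c \<noteq> nN) \<noteq> ev, im \<and> ((nS \<noteq> c) \<noteq> (\<not> ev)), (c \<noteq> nW) \<noteq> (\<not> ev), jn \<and> ((nE \<noteq> c) \<noteq> ev))"

lemma la_arith:
  fixes c c' nN nW nS nE :: nat
  assumes hN: "nN \<le> c" "c \<le> Suc nN" and hW: "nW \<le> c" "c \<le> Suc nW"
    and hS: "im \<Longrightarrow> c \<le> nS \<and> nS \<le> Suc c"
    and hE: "jn \<Longrightarrow> c \<le> nE \<and> nE \<le> Suc c"
    and c': "c' = (if nN = c \<and> nW = c \<and> (im \<longrightarrow> nS = Suc c) \<and> (jn \<longrightarrow> nE = Suc c) then Suc c
      else if Suc nN = c \<and> Suc nW = c \<and> (im \<longrightarrow> nS = c) \<and> (jn \<longrightarrow> nE = c) then c - 1 else c)"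
  shows "bits ev im jn nN nW nS nE c' = swpb (patA ev im jn) (patB ev im jn) (bits ev im jn nN nW nS nE c)"
proof -
  let ?add = "nN = c \<and> nW = c \<and> (im \<longrightarrow> nS = Suc c) \<and> (jn \<longrightarrow> nE = Suc c)"
  let ?rem = "Suc nN = c \<and> Suc nW = c \<and> (im \<longrightarrow> nS = c) \<and> (jn \<longrightarrow> nE = c)"
  have N: "nN = c \<or> Suc nN = c" and W: "nW = c \<or> Suc nW = c" using hN hW by auto
  have S: "\<not> im \<or> nS = c \<or> nS = Suc c" and E: "\<not> jn \<or> nE = c \<or> nE = Suc c" using hS hE by auto
  have bA: "bits ev im jn nN nW nS nE c = patA ev im jn \<longleftrightarrow> ?add"
    using N W S E unfolding bits_def patA_def
    by (cases ev; cases im; cases jn) auto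
  have bB: "bits ev im jn nN nW nS nE c = patB ev im jn \<longleftrightarrow> ?rem"
    using N W S E unfolding bits_def patB_def
    by (cases ev; cases im; cases jn) auto
  show ?thesis
  proof (cases ?add)
    case True
    then have "c' = Suc c" using c' by simp
    then show ?thesis using True bA unfolding swpb_def bits_def patA_def patB_def
      by (cases ev; cases im; cases jn) auto
  next
    case False
    note nadd = False
    show ?thesis
    proof (cases ?rem)
      case True
      then obtain d where d: "c = Suc d" by auto
      have "c' = d" using c' nadd True d by simp
      then show ?thesis using True nadd bA bB d unfolding swpb_def bits_def patA_def patB_def
        by (cases ev; cases im; cases jn) auto
    next
      case False
      then have "c' = c" by (simp only: c' nadd False if_False)
      moreover have "bits ev im jn nN nW nS nE c \<noteq> patA ev im jn" using bA nadd by blast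
      moreover have "bits ev im jn nN nW nS nE c \<noteq> patB ev im jn" using bB False by blast
      ultimately show ?thesis unfolding swpb_def by simp
    qed
  qed
qed

lemma newc_ar:
  fixes c c' nN nW nS nE :: nat
  assumes hN: "nN \<le> c" "c \<le> Suc nN" and hW: "nW \<le> c" "c \<le> Suc nW"
    and hS: "im \<Longrightarrow> c \<le> nS \<and> nS \<le> Suc c"
    and hE: "jn \<Longrightarrow> c \<le> nE \<and> nE \<le> Suc c"
    and c': "c' = (if nN = c \<and> nW = c \<and> (im \<longrightarrow> nS = Suc c) \<and> (jn \<longrightarrow> nE = Suc c) then Suc c
      else if Suc nN = c \<and> Suc nW = c \<and> (im \<longrightarrow> nS = c) \<and> (jn \<longrightarrow> nE = c) then c - 1 else c)"
  shows "nN \<le> c' \<and> c' \<le> Suc nN \<and> nW \<le> c' \<and> c' \<le> Suc nW \<and> (im \<longrightarrow> c' \<le> nS \<and> nS \<le> Suc c') \<and> (jn \<longrightarrow> c' \<le> nE \<and> nE \<le> Suc c')"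
proof (cases "nN = c \<and> nW = c \<and> (im \<longrightarrow> nS = Suc c) \<and> (jn \<longrightarrow> nE = Suc c)")
  case True
  then have "c' = Suc c" using c' by simp
  then show ?thesis using True hS hE by auto
next
  case False
  note nadd = False
  show ?thesis
  proof (cases "Suc nN = c \<and> Suc nW = c \<and> (im \<longrightarrow> nS = c) \<and> (jn \<longrightarrow> nE = c)")
    case True
    then obtain d where d: "c = Suc d" by auto
    have "c' = d" using c' nadd True d by simp
    then show ?thesis using True d by auto
  next
    case False
    then have "c' = c" by (simp only: c' nadd False if_False)
    then show ?thesis using assms by auto
  qed
qed

definition newc :: "nat \<Rightarrow> nat \<Rightarrow> (nat \<Rightarrow> nat \<Rightarrow> nat) \<Rightarrow> nat \<Rightarrow> nat \<Rightarrow> nat" where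
  "newc m n h i j = (if h (i-1) j = h i j \<and> h i (j-1) = h i j \<and> (i < m \<longrightarrow> h (Suc i) j = Suc (h i j)) \<and> (j < n \<longrightarrow> h i (Suc j) = Suc (h i j)) then Suc (h i j)
      else if Suc (h (i-1) j) = h i j \<and> Suc (h i (j-1)) = h i j \<and> (i < m \<longrightarrow> h (Suc i) j = h i j) \<and> (j < n \<longrightarrow> h i (Suc j) = h i j) then h i j - 1 else h i j)"

definition htog :: "nat \<Rightarrow> nat \<Rightarrow> (nat \<Rightarrow> nat \<Rightarrow> nat) \<Rightarrow> nat \<times> nat \<Rightarrow> nat \<Rightarrow> nat \<Rightarrow> nat" where
  "htog m n h q = (case q of (i,j) \<Rightarrow> if i = 0 \<or> j = 0 then h else (\<lambda>a b. if a = i \<and> b = j then newc m n h i j else h a b))"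

lemma htog_0: "i = 0 \<or> j = 0 \<Longrightarrow> htog m n h (i,j) = h"
  by (simp add: htog_def)

lemma htog_app: "1 \<le> i \<Longrightarrow> 1 \<le> j \<Longrightarrow> htog m n h (i,j) a b = (if a = i \<and> b = j then newc m n h i j else h a b)"
  by (simp add: htog_def)

lemma nbrs:
  assumes h: "Hval m n h" and ij: "1 \<le> i" "i \<le> m" "1 \<le> j" "j \<le> n"
  shows "h (i-1) j \<le> h i j" "h i j \<le> Suc (h (i-1) j)" "h i (j-1) \<le> h i j" "h i j \<le> Suc (h i (j-1))"
    "i < m \<Longrightarrow> h i j \<le> h (Suc i) j \<and> h (Suc i) j \<le> Suc (h i j)"
    "j < n \<Longrightarrow> h i j \<le> h i (Suc j) \<and> h i (Suc j) \<le> Suc (h i j)"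
  using Hval_col[OF h, of "i-1" j] Hval_row[OF h, of i "j-1"] Hval_col[OF h, of i j] Hval_row[OF h, of i j] ij
  by auto

lemma newc_bounds:
  assumes h: "Hval m n h" and ij: "1 \<le> i" "i \<le> m" "1 \<le> j" "j \<le> n"
  shows "h (i-1) j \<le> newc m n h i j \<and> newc m n h i j \<le> Suc (h (i-1) j) \<and>
    h i (j-1) \<le> newc m n h i j \<and> newc m n h i j \<le> Suc (h i (j-1)) \<and>
    (i < m \<longrightarrow> newc m n h i j \<le> h (Suc i) j \<and> h (Suc i) j \<le> Suc (newc m n h i j)) \<and>
    (j < n \<longrightarrow> newc m n h i j \<le> h i (Suc j) \<and> h i (Suc j) \<le> Suc (newc m n h i j))"
  by (rule newc_ar[OF nbrs[OF h ij]]) (auto simp: newc_def)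

lemma Hval_htog:
  assumes h: "Hval m n h" and ij: "i \<le> m" "j \<le> n"
  shows "Hval m n (htog m n h (i,j))"
proof (cases "i = 0 \<or> j = 0")
  case True then show ?thesis using h by (simp add: htog_0)
next
  case False
  then have ij1: "1 \<le> i" "1 \<le> j" by auto
  let ?h = "htog m n h (i,j)"
  let ?c = "newc m n h i j"
  have hh: "\<And>a b. ?h a b = (if a = i \<and> b = j then ?c else h a b)" using htog_app[OF ij1] by simp
  have nb: "h (i-1) j \<le> ?c \<and> ?c \<le> Suc (h (i-1) j) \<and> h i (j-1) \<le> ?c \<and> ?c \<le> Suc (h i (j-1)) \<and>
    (i < m \<longrightarrow> ?c \<le> h (Suc i) j \<and> h (Suc i) j \<le> Suc ?c) \<and>
    (j < n \<longrightarrow> ?c \<le> h i (Suc j) \<and> h i (Suc j) \<le> Suc ?c)"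
    using newc_bounds[OF h ij1(1) ij(1) ij1(2) ij(2)] .
  have col: "?h a b \<le> ?h (Suc a) b \<and> ?h (Suc a) b \<le> Suc (?h a b)" if ab: "a < m" "b \<le> n" for a b
  proof -
    consider "a = i \<and> b = j" | "Suc a = i \<and> b = j" | "\<not> (a = i \<and> b = j) \<and> \<not> (Suc a = i \<and> b = j)" by blast
    then show ?thesis
    proof cases
      case 1 then show ?thesis using nb ab hh by auto
    next
      case 2 then show ?thesis using nb ab hh by auto
    next
      case 3 then show ?thesis using Hval_col[OF h ab] hh by auto
    qed
  qed
  have row: "?h a b \<le> ?h a (Suc b) \<and> ?h a (Suc b) \<le> Suc (?h a b)" if ab: "a \<le> m" "b < n" for a b
  proof -
    consider "a = i \<and> b = j" | "a = i \<and> Suc b = j" | "\<not> (a = i \<and> b = j) \<and> \<not> (a = i \<and> Suc b = j)" by blast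
    then show ?thesis
    proof cases
      case 1 then show ?thesis using nb ab hh by auto
    next
      case 2 then show ?thesis using nb ab hh by auto
    next
      case 3 then show ?thesis using Hval_row[OF h ab] hh by auto
    qed
  qed
  show ?thesis unfolding Hval_def using col row h ij1 hh by (auto simp: Hval_def)
qed



definition Sq :: "nat \<Rightarrow> nat \<Rightarrow> nat \<Rightarrow> nat \<Rightarrow> edge set" where
  "Sq m n i j = {He i j, He (Suc i) j, Ve i j, Ve i (Suc j)} \<inter> Gedges m n"

definition selset :: "nat \<Rightarrow> nat \<Rightarrow> bool \<times> bool \<times> bool \<times> bool \<Rightarrow> edge set" where
  "selset i j z = (case z of (t,b,l,r) \<Rightarrow>
     {x. (x = He i j \<and> t) \<or> (x = He (Suc i) j \<and> b) \<or> (x = Ve i j \<and> l) \<or> (x = Ve i (Suc j) \<and> r)})"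

lemma selset_alt: "selset i j (t,b,l,r) = (if t then insert (He i j) else id) ((if b then insert (He (Suc i) j) else id)
   ((if l then insert (Ve i j) else id) ((if r then insert (Ve i (Suc j)) else id) {})))"
  by (auto simp: selset_def)

lemma selset_inj: "selset i j z = selset i j z' \<longleftrightarrow> z = z'"
proof
  assume e: "selset i j z = selset i j z'"
  obtain t b l r where z: "z = (t,b,l,r)" by (cases z) auto
  obtain t' b' l' r' where z': "z' = (t',b',l',r')" by (cases z') auto
  have "He i j \<in> selset i j z \<longleftrightarrow> He i j \<in> selset i j z'" using e by simp
  then have "t = t'" using z z' by (simp add: selset_def)
  have "He (Suc i) j \<in> selset i j z \<longleftrightarrow> He (Suc i) j \<in> selset i j z'" using e by simp
  then have "b = b'" using z z' by (simp add: selset_def)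
  have "Ve i j \<in> selset i j z \<longleftrightarrow> Ve i j \<in> selset i j z'" using e by simp
  then have "l = l'" using z z' by (simp add: selset_def)
  have "Ve i (Suc j) \<in> selset i j z \<longleftrightarrow> Ve i (Suc j) \<in> selset i j z'" using e by simp
  then have "r = r'" using z z' by (simp add: selset_def)
  show "z = z'" using z z' \<open>t = t'\<close> \<open>b = b'\<close> \<open>l = l'\<close> \<open>r = r'\<close> by simp
qed simp

lemma swpb_selset: "selset i j (swpb A B z) = swpb (selset i j A) (selset i j B) (selset i j z)"
  by (simp add: swpb_def selset_inj)

lemma swap_sides_eq:
  assumes "A \<subseteq> S" "B \<subseteq> S"
  shows "swap_sides S A B F = (F - S) \<union> swpb A B (F \<inter> S)"
  using assms unfolding swap_sides_def swpb_def by auto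

lemma sq_eqs: "sq_top i j = He i j" "sq_bottom i j = He (Suc i) j" "sq_left i j = Ve i j" "sq_right i j = Ve i (Suc j)"
  by (auto simp: sq_top_def sq_bottom_def sq_left_def sq_right_def He_def Ve_def)

lemma la_eq:
  assumes ij: "1 \<le> i" "i \<le> m" "1 \<le> j" "j \<le> n"
  shows "local_action m n (i,j) F =
    swap_sides (Sq m n i j)
      (if i < m \<and> j < n then {He i j, He (Suc i) j} else if i < m then {Ve i j} else if j < n then {He i j} else {Ve i j})
      (if i < m \<and> j < n then {Ve i j, Ve i (Suc j)} else if i < m then {He i j, He (Suc i) j} else if j < n then {Ve i j, Ve i (Suc j)} else {He i j})
      F"
proof -
  have "i \<noteq> 0" "j \<noteq> 0" using ij by auto
  moreover have "(1 \<le> i \<and> i \<le> m - 1) \<longleftrightarrow> i < m" "(1 \<le> j \<and> j \<le> n - 1) \<longleftrightarrow> j < n" using ij by auto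
  ultimately show ?thesis using ij unfolding local_action_def Let_def sq_eqs Sq_def
    by (auto simp: le_less)
qed

lemma la_sel:
  assumes ij: "1 \<le> i" "i \<le> m" "1 \<le> j" "j \<le> n"
  defines "ev \<equiv> even (i+j)"
  shows "local_action m n (i,j) F = (F - Sq m n i j) \<union>
     swpb (selset i j (patA ev (i<m) (j<n))) (selset i j (patB ev (i<m) (j<n))) (F \<inter> Sq m n i j)"
proof -
  let ?A = "(if i < m \<and> j < n then {He i j, He (Suc i) j} else if i < m then {Ve i j} else if j < n then {He i j} else {Ve i j})"
  let ?B = "(if i < m \<and> j < n then {Ve i j, Ve i (Suc j)} else if i < m then {He i j, He (Suc i) j} else if j < n then {Ve i j, Ve i (Suc j)} else {He i j})"
  have AS: "?A \<subseteq> Sq m n i j" "?B \<subseteq> Sq m n i j" using ij by (auto simp: Sq_def)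
  have "(?A = selset i j (patA ev (i<m) (j<n)) \<and> ?B = selset i j (patB ev (i<m) (j<n))) \<or>
        (?B = selset i j (patA ev (i<m) (j<n)) \<and> ?A = selset i j (patB ev (i<m) (j<n)))"
    by (cases ev; cases "i < m"; cases "j < n") (simp_all add: selset_alt patA_def patB_def)
  then have "swpb ?A ?B = swpb (selset i j (patA ev (i<m) (j<n))) (selset i j (patB ev (i<m) (j<n)))"
  proof (elim disjE conjE)
    assume "?A = selset i j (patA ev (i<m) (j<n))" "?B = selset i j (patB ev (i<m) (j<n))"
    then show ?thesis by simp
  next
    assume "?B = selset i j (patA ev (i<m) (j<n))" "?A = selset i j (patB ev (i<m) (j<n))"
    then show ?thesis using swpb_sym[of ?A ?B] by simp
  qed
  then show ?thesis using la_eq[OF ij] swap_sides_eq[OF AS] by simp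
qed

lemma FhS:
  assumes ij: "1 \<le> i" "i \<le> m" "1 \<le> j" "j \<le> n"
  shows "Fh m n g \<inter> Sq m n i j = selset i j (bits (even (i+j)) (i<m) (j<n) (g (i-1) j) (g i (j-1)) (g (Suc i) j) (g i (Suc j)) (g i j))"
proof -
  have mT: "He i j \<in> Fh m n g \<longleftrightarrow> (g i j \<noteq> g (i-1) j) \<noteq> even (i+j)" using ij by (simp add: He_Fh)
  have mB: "He (Suc i) j \<in> Fh m n g \<longleftrightarrow> i < m \<and> ((g (Suc i) j \<noteq> g i j) \<noteq> (\<not> even (i+j)))" using ij by (auto simp: He_Fh)
  have mL: "Ve i j \<in> Fh m n g \<longleftrightarrow> (g i j \<noteq> g i (j-1)) \<noteq> (\<not> even (i+j))" using ij by (simp add: Ve_Fh)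
  have mR: "Ve i (Suc j) \<in> Fh m n g \<longleftrightarrow> j < n \<and> ((g i (Suc j) \<noteq> g i j) \<noteq> even (i+j))" using ij by (auto simp: Ve_Fh)
  have G: "Fh m n g \<subseteq> Gedges m n" by (rule Fh_G)
  show ?thesis
  proof (rule set_eqI)
    fix x
    show "x \<in> Fh m n g \<inter> Sq m n i j \<longleftrightarrow> x \<in> selset i j (bits (even (i+j)) (i<m) (j<n) (g (i-1) j) (g i (j-1)) (g (Suc i) j) (g i (Suc j)) (g i j))"
      unfolding Sq_def selset_def bits_def using mT mB mL mR G by auto
  qed
qed

lemma Fh_out:
  assumes ij: "1 \<le> i" "1 \<le> j"
    and ag: "\<And>a b. (a,b) \<noteq> (i,j) \<Longrightarrow> h' a b = h a b"
    and e: "e \<notin> {He i j, He (Suc i) j, Ve i j, Ve i (Suc j)}"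
  shows "e \<in> Fh m n h' \<longleftrightarrow> e \<in> Fh m n h"
proof (cases "e \<in> Gedges m n")
  case False then show ?thesis using Fh_G by blast
next
  case True
  then consider (V) i' j' where "e = Ve i' j'" "i' \<le> m" "1 \<le> j'" "j' \<le> n"
    | (H) i' j' where "e = He i' j'" "1 \<le> i'" "i' \<le> m" "j' \<le> n"
    unfolding Gedges_eq by blast
  then show ?thesis
  proof cases
    case V
    have "(i',j') \<noteq> (i,j)" "(i', j' - 1) \<noteq> (i,j)" using V e by auto
    then show ?thesis using V ag[of i' j'] ag[of i' "j'-1"] by (simp add: Ve_Fh)
  next
    case H
    have "(i',j') \<noteq> (i,j)" "(i' - 1, j') \<noteq> (i,j)" using H e by auto
    then show ?thesis using H ag[of i' j'] ag[of "i'-1" j'] by (simp add: He_Fh)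
  qed
qed

lemma la_Fh:
  assumes h: "Hval m n h" and ij: "1 \<le> i" "i \<le> m" "1 \<le> j" "j \<le> n"
  shows "local_action m n (i,j) (Fh m n h) = Fh m n (htog m n h (i,j))"
proof -
  let ?h = "htog m n h (i,j)"
  let ?S = "Sq m n i j"
  let ?ev = "even (i+j)"
  let ?c = "newc m n h i j"
  have hh: "\<And>a b. ?h a b = (if a = i \<and> b = j then ?c else h a b)" using htog_app ij by simp
  have ag: "\<And>a b. (a,b) \<noteq> (i,j) \<Longrightarrow> ?h a b = h a b" using hh by auto
  have out: "Fh m n ?h - ?S = Fh m n h - ?S"
  proof (rule set_eqI)
    fix e
    show "e \<in> Fh m n ?h - ?S \<longleftrightarrow> e \<in> Fh m n h - ?S"
    proof (cases "e \<in> {He i j, He (Suc i) j, Ve i j, Ve i (Suc j)}")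
      case True
      then have "e \<in> Fh m n ?h \<Longrightarrow> e \<in> ?S" "e \<in> Fh m n h \<Longrightarrow> e \<in> ?S" using Fh_G unfolding Sq_def by blast+
      then show ?thesis by blast
    next
      case False
      have "e \<in> Fh m n ?h \<longleftrightarrow> e \<in> Fh m n h"
        by (rule Fh_out[of i j ?h h e m n]) (use ij ag False in auto)
      then show ?thesis by blast
    qed
  qed
  have nv: "?h (i-1) j = h (i-1) j" "?h i (j-1) = h i (j-1)" "?h (Suc i) j = h (Suc i) j" "?h i (Suc j) = h i (Suc j)" "?h i j = ?c"
    using hh ij by auto
  have ar: "bits ?ev (i<m) (j<n) (h (i-1) j) (h i (j-1)) (h (Suc i) j) (h i (Suc j)) ?c =
     swpb (patA ?ev (i<m) (j<n)) (patB ?ev (i<m) (j<n)) (bits ?ev (i<m) (j<n) (h (i-1) j) (h i (j-1)) (h (Suc i) j) (h i (Suc j)) (h i j))"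
    by (rule la_arith[OF nbrs[OF h ij]]; simp only: newc_def)
  have "local_action m n (i,j) (Fh m n h) = (Fh m n h - ?S) \<union>
     swpb (selset i j (patA ?ev (i<m) (j<n))) (selset i j (patB ?ev (i<m) (j<n))) (Fh m n h \<inter> ?S)"
    by (rule la_sel[OF ij])
  also have "swpb (selset i j (patA ?ev (i<m) (j<n))) (selset i j (patB ?ev (i<m) (j<n))) (Fh m n h \<inter> ?S) = Fh m n ?h \<inter> ?S"
    unfolding FhS[OF ij, of h] FhS[OF ij, of ?h] nv swpb_selset[symmetric] ar ..
  finally show ?thesis using out by blast
qed



lemma tog_arith:
  fixes a0 b0 k c nN nW nS nE :: nat
  assumes P: "k \<le> a0" "k \<le> b0" "a0 < m" "b0 < n"
    and hN: "nN \<le> c" "c \<le> Suc nN" and hW: "nW \<le> c" "c \<le> Suc nW"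
    and hS: "Suc a0 < m \<Longrightarrow> c \<le> nS \<and> nS \<le> Suc c"
    and hE: "Suc b0 < n \<Longrightarrow> c \<le> nE \<and> nE \<le> Suc c"
    and bc: "c \<le> Suc a0" "c \<le> Suc b0" and bN: "nN \<le> a0" and bW: "nW \<le> b0"
    and bS: "Suc a0 < m \<Longrightarrow> nS \<le> Suc b0" and bE: "Suc b0 < n \<Longrightarrow> nE \<le> Suc a0"
    and c': "c' = (if nN = c \<and> nW = c \<and> (Suc a0 < m \<longrightarrow> nS = Suc c) \<and> (Suc b0 < n \<longrightarrow> nE = Suc c) then Suc c
      else if Suc nN = c \<and> Suc nW = c \<and> (Suc a0 < m \<longrightarrow> nS = c) \<and> (Suc b0 < n \<longrightarrow> nE = c) then c - 1 else c)"
  shows "((k < c \<and> ((0 < a0 \<and> k < a0 \<and> k \<le> b0 \<and> k < nN) \<or> (0 < b0 \<and> k \<le> a0 \<and> k < b0 \<and> k < nW) \<or>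
            (Suc k \<le> Suc a0 \<and> Suc k \<le> b0 \<and> Suc a0 < m \<and> Suc k < nS) \<or>
            (Suc k \<le> a0 \<and> Suc k \<le> Suc b0 \<and> Suc b0 < n \<and> Suc k < nE))) \<or>
         (\<not> k < c \<and> ((k \<le> Suc a0 \<and> k \<le> b0 \<and> Suc a0 < m) \<longrightarrow> k < nS) \<and>
            ((k \<le> a0 \<and> k \<le> Suc b0 \<and> Suc b0 < n) \<longrightarrow> k < nE) \<and>
            ((0 < k \<and> 0 < a0 \<and> k - 1 \<le> a0 - 1 \<and> k - 1 \<le> b0) \<longrightarrow> k - 1 < nN) \<and>
            ((0 < k \<and> 0 < b0 \<and> k - 1 \<le> a0 \<and> k - 1 \<le> b0 - 1) \<longrightarrow> k - 1 < nW)))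
     \<longleftrightarrow> k < c'" (is "?L \<longleftrightarrow> _")
proof -
  consider "Suc k < c" | "Suc k = c" | "k = c" | "c < k" by linarith
  then show ?thesis
  proof cases
    case 1
    then have "?L" using P hN bN by (cases a0) auto
    moreover have "k < c'" using 1 c' by auto
    ultimately show ?thesis by simp
  next
    case 2
    show ?thesis
    proof (cases "Suc nN = c \<and> Suc nW = c \<and> (Suc a0 < m \<longrightarrow> nS = c) \<and> (Suc b0 < n \<longrightarrow> nE = c)")
      case True
      then have "c' = c - 1" using c' 2 by auto
      then have "\<not> k < c'" using 2 by simp
      moreover have "\<not> ?L" using 2 True by auto
      ultimately show ?thesis by simp
    next
      case False
      then have "k < c'" using c' 2 by auto
      moreover have "?L" using 2 False P hN hW hS hE bc bN bW bS bE by auto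
      ultimately show ?thesis by simp
    qed
  next
    case 3
    show ?thesis
    proof (cases "nN = c \<and> nW = c \<and> (Suc a0 < m \<longrightarrow> nS = Suc c) \<and> (Suc b0 < n \<longrightarrow> nE = Suc c)")
      case True
      then have "c' = Suc c" using c' by auto
      then have "k < c'" using 3 by simp
      moreover have "?L" using 3 True P bN bW by (cases k) auto
      ultimately show ?thesis by simp
    next
      case False
      then have "c' \<le> c" using c' by auto
      then have "\<not> k < c'" using 3 by simp
      moreover have "\<not> ?L" using 3 False P hN hW hS hE bc bN bW bS bE by auto
      ultimately show ?thesis by simp
    qed
  next
    case 4
    have "c' \<le> Suc c" using c' by auto
    then have "\<not> k < c'" using 4 by simp
    moreover have "\<not> ?L" using 4 P hN by (cases k) auto
    ultimately show ?thesis by simp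
  qed
qed

lemma upcov:
  assumes Y: "Y \<subseteq> Pmn m n" and xP: "(int a, int b, int k) \<in> Pmn m n"
  shows "(\<exists>u. ((int a, int b, int k), u) \<in> cover_rel m n \<and> u \<in> Y) \<longleftrightarrow>
    (0 < a \<and> (int (a-1), int b, int k) \<in> Y) \<or> (0 < b \<and> (int a, int (b-1), int k) \<in> Y) \<or>
    (int (Suc a), int b, int (Suc k)) \<in> Y \<or> (int a, int (Suc b), int (Suc k)) \<in> Y"
proof
  assume "\<exists>u. ((int a, int b, int k), u) \<in> cover_rel m n \<and> u \<in> Y"
  then obtain u where u: "((int a, int b, int k), u) \<in> cover_rel m n" "u \<in> Y" by blast
  obtain a' b' k' where ue: "u = (int a', int b', int k')" using P_elem u(2) Y by blast
  have "(a = Suc a' \<and> b = b' \<and> k = k') \<or> (a = a' \<and> b = Suc b' \<and> k = k') \<or>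
     (Suc a = a' \<and> b = b' \<and> Suc k = k') \<or> (a = a' \<and> Suc b = b' \<and> Suc k = k')"
    using u(1) unfolding ue cov_nat by blast
  then show "(0 < a \<and> (int (a-1), int b, int k) \<in> Y) \<or> (0 < b \<and> (int a, int (b-1), int k) \<in> Y) \<or>
    (int (Suc a), int b, int (Suc k)) \<in> Y \<or> (int a, int (Suc b), int (Suc k)) \<in> Y"
    using u(2) ue by auto
next
  assume A: "(0 < a \<and> (int (a-1), int b, int k) \<in> Y) \<or> (0 < b \<and> (int a, int (b-1), int k) \<in> Y) \<or>
    (int (Suc a), int b, int (Suc k)) \<in> Y \<or> (int a, int (Suc b), int (Suc k)) \<in> Y"
  show "\<exists>u. ((int a, int b, int k), u) \<in> cover_rel m n \<and> u \<in> Y"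
    using A
  proof (elim disjE conjE)
    assume "0 < a" "(int (a-1), int b, int k) \<in> Y"
    moreover have "((int a, int b, int k), (int (a-1), int b, int k)) \<in> cover_rel m n"
      unfolding cov_nat using calculation Y xP by auto
    ultimately show ?thesis by blast
  next
    assume "0 < b" "(int a, int (b-1), int k) \<in> Y"
    moreover have "((int a, int b, int k), (int a, int (b-1), int k)) \<in> cover_rel m n"
      unfolding cov_nat using calculation Y xP by auto
    ultimately show ?thesis by blast
  next
    assume "(int (Suc a), int b, int (Suc k)) \<in> Y"
    moreover have "((int a, int b, int k), (int (Suc a), int b, int (Suc k))) \<in> cover_rel m n"
      unfolding cov_nat using calculation Y xP by blast
    ultimately show ?thesis by blast
  next
    assume "(int a, int (Suc b), int (Suc k)) \<in> Y"
    moreover have "((int a, int b, int k), (int a, int (Suc b), int (Suc k))) \<in> cover_rel m n"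
      unfolding cov_nat using calculation Y xP by blast
    ultimately show ?thesis by blast
  qed
qed

lemma lowcov:
  assumes Y: "Y \<subseteq> Pmn m n" and xP: "(int a, int b, int k) \<in> Pmn m n"
  shows "(\<forall>w. (w, (int a, int b, int k)) \<in> cover_rel m n \<longrightarrow> w \<in> Y) \<longleftrightarrow>
    (((int (Suc a), int b, int k) \<in> Pmn m n \<longrightarrow> (int (Suc a), int b, int k) \<in> Y) \<and>
     ((int a, int (Suc b), int k) \<in> Pmn m n \<longrightarrow> (int a, int (Suc b), int k) \<in> Y) \<and>
     ((0 < a \<and> 0 < k \<and> (int (a-1), int b, int (k-1)) \<in> Pmn m n) \<longrightarrow> (int (a-1), int b, int (k-1)) \<in> Y) \<and>
     ((0 < b \<and> 0 < k \<and> (int a, int (b-1), int (k-1)) \<in> Pmn m n) \<longrightarrow> (int a, int (b-1), int (k-1)) \<in> Y))"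
proof
  assume A: "\<forall>w. (w, (int a, int b, int k)) \<in> cover_rel m n \<longrightarrow> w \<in> Y"
  have c1: "(int (Suc a), int b, int k) \<in> Pmn m n \<Longrightarrow> ((int (Suc a), int b, int k), (int a, int b, int k)) \<in> cover_rel m n"
    unfolding cov_nat using xP by blast
  have c2: "(int a, int (Suc b), int k) \<in> Pmn m n \<Longrightarrow> ((int a, int (Suc b), int k), (int a, int b, int k)) \<in> cover_rel m n"
    unfolding cov_nat using xP by blast
  have c3: "0 < a \<Longrightarrow> 0 < k \<Longrightarrow> (int (a-1), int b, int (k-1)) \<in> Pmn m n \<Longrightarrow> ((int (a-1), int b, int (k-1)), (int a, int b, int k)) \<in> cover_rel m n"
    unfolding cov_nat using xP by auto
  have c4: "0 < b \<Longrightarrow> 0 < k \<Longrightarrow> (int a, int (b-1), int (k-1)) \<in> Pmn m n \<Longrightarrow> ((int a, int (b-1), int (k-1)), (int a, int b, int k)) \<in> cover_rel m n"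
    unfolding cov_nat using xP by auto
  show "((int (Suc a), int b, int k) \<in> Pmn m n \<longrightarrow> (int (Suc a), int b, int k) \<in> Y) \<and>
     ((int a, int (Suc b), int k) \<in> Pmn m n \<longrightarrow> (int a, int (Suc b), int k) \<in> Y) \<and>
     ((0 < a \<and> 0 < k \<and> (int (a-1), int b, int (k-1)) \<in> Pmn m n) \<longrightarrow> (int (a-1), int b, int (k-1)) \<in> Y) \<and>
     ((0 < b \<and> 0 < k \<and> (int a, int (b-1), int (k-1)) \<in> Pmn m n) \<longrightarrow> (int a, int (b-1), int (k-1)) \<in> Y)"
    using A c1 c2 c3 c4 by blast
next
  assume A: "((int (Suc a), int b, int k) \<in> Pmn m n \<longrightarrow> (int (Suc a), int b, int k) \<in> Y) \<and>
     ((int a, int (Suc b), int k) \<in> Pmn m n \<longrightarrow> (int a, int (Suc b), int k) \<in> Y) \<and>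
     ((0 < a \<and> 0 < k \<and> (int (a-1), int b, int (k-1)) \<in> Pmn m n) \<longrightarrow> (int (a-1), int b, int (k-1)) \<in> Y) \<and>
     ((0 < b \<and> 0 < k \<and> (int a, int (b-1), int (k-1)) \<in> Pmn m n) \<longrightarrow> (int a, int (b-1), int (k-1)) \<in> Y)"
  show "\<forall>w. (w, (int a, int b, int k)) \<in> cover_rel m n \<longrightarrow> w \<in> Y"
  proof (intro allI impI)
    fix w assume c: "(w, (int a, int b, int k)) \<in> cover_rel m n"
    have wP: "w \<in> Pmn m n" using cover_relD(2)[OF c] .
    obtain a' b' k' where we: "w = (int a', int b', int k')" using P_elem wP by blast
    have "(a' = Suc a \<and> b' = b \<and> k' = k) \<or> (a' = a \<and> b' = Suc b \<and> k' = k) \<or>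
       (Suc a' = a \<and> b' = b \<and> Suc k' = k) \<or> (a' = a \<and> Suc b' = b \<and> Suc k' = k)"
      using c unfolding we cov_nat by blast
    then show "w \<in> Y" using A wP we by auto
  qed
qed

definition fiber :: "nat \<Rightarrow> nat \<Rightarrow> nat \<times> nat \<Rightarrow> pt set" where
  "fiber m n q = (case q of (i,j) \<Rightarrow> {x \<in> Pmn m n. fst x = int i - 1 \<and> fst (snd x) = int j - 1})"

lemma fiber_nat: "(int a, int b, int k) \<in> fiber m n (i,j) \<longleftrightarrow> (int a, int b, int k) \<in> Pmn m n \<and> i = Suc a \<and> j = Suc b"
  by (auto simp: fiber_def)

lemma fiber0: "i = 0 \<or> j = 0 \<Longrightarrow> fiber m n (i,j) = {}"
  by (auto simp: fiber_def Pmn_def)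

lemma Xh_htog:
  assumes h: "Hval m n h" and ij: "1 \<le> i" "i \<le> m" "1 \<le> j" "j \<le> n"
  shows "Xh m n (htog m n h (i,j)) = togS m n (fiber m n (i,j)) (Xh m n h)"
proof (rule set_eqI)
  fix x
  let ?h = "htog m n h (i,j)"
  have hh: "\<And>a b. ?h a b = (if a = i \<and> b = j then newc m n h i j else h a b)" using htog_app ij by simp
  have XP: "Xh m n h \<subseteq> Pmn m n" by (rule Xh_sub)
  show "x \<in> Xh m n ?h \<longleftrightarrow> x \<in> togS m n (fiber m n (i,j)) (Xh m n h)"
  proof (cases "x \<in> Pmn m n")
    case False
    then show ?thesis using Xh_sub XP unfolding togS_def by blast
  next
    case True
    then obtain a0 b0 k where xe: "x = (int a0, int b0, int k)" using P_elem by blast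
    have P: "k \<le> a0" "k \<le> b0" "a0 < m" "b0 < n" using True unfolding xe P_nat by auto
    show ?thesis
    proof (cases "i = Suc a0 \<and> j = Suc b0")
      case False
      then have "x \<notin> fiber m n (i,j)" unfolding xe fiber_nat by blast
      then have "x \<in> togS m n (fiber m n (i,j)) (Xh m n h) \<longleftrightarrow> x \<in> Xh m n h" by (rule togS_notin)
      moreover have "x \<in> Xh m n ?h \<longleftrightarrow> x \<in> Xh m n h" unfolding xe Xh_nat using hh False by auto
      ultimately show ?thesis by simp
    next
      case True2: True
      then have ij': "i = Suc a0" "j = Suc b0" by auto
      have inF: "x \<in> fiber m n (i,j)" unfolding xe fiber_nat using True xe ij' by simp
      let ?c = "h i j"
      let ?nN = "h a0 j" let ?nW = "h i b0" let ?nS = "h (Suc i) j" let ?nE = "h i (Suc j)"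
      have X1: "x \<in> Xh m n ?h \<longleftrightarrow> k < newc m n h i j" unfolding xe Xh_nat using hh ij' P by auto
      have X0: "x \<in> Xh m n h \<longleftrightarrow> k < ?c" unfolding xe Xh_nat using ij' P by auto
      have U1: "(0 < a0 \<and> (int (a0-1), int b0, int k) \<in> Xh m n h) \<longleftrightarrow> (0 < a0 \<and> k < a0 \<and> k \<le> b0 \<and> k < ?nN)"
        unfolding Xh_nat using P ij' by (cases a0) auto
      have U2: "(0 < b0 \<and> (int a0, int (b0-1), int k) \<in> Xh m n h) \<longleftrightarrow> (0 < b0 \<and> k \<le> a0 \<and> k < b0 \<and> k < ?nW)"
        unfolding Xh_nat using P ij' by (cases b0) auto
      have U3: "(int (Suc a0), int b0, int (Suc k)) \<in> Xh m n h \<longleftrightarrow> (Suc k \<le> Suc a0 \<and> Suc k \<le> b0 \<and> Suc a0 < m \<and> Suc k < ?nS)"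
        unfolding Xh_nat using P ij' by auto
      have U4: "(int a0, int (Suc b0), int (Suc k)) \<in> Xh m n h \<longleftrightarrow> (Suc k \<le> a0 \<and> Suc k \<le> Suc b0 \<and> Suc b0 < n \<and> Suc k < ?nE)"
        unfolding Xh_nat using P ij' by auto
      have L1: "((int (Suc a0), int b0, int k) \<in> Pmn m n \<longrightarrow> (int (Suc a0), int b0, int k) \<in> Xh m n h) \<longleftrightarrow>
          ((k \<le> Suc a0 \<and> k \<le> b0 \<and> Suc a0 < m) \<longrightarrow> k < ?nS)"
        unfolding Xh_nat P_nat using P ij' by auto
      have L2: "((int a0, int (Suc b0), int k) \<in> Pmn m n \<longrightarrow> (int a0, int (Suc b0), int k) \<in> Xh m n h) \<longleftrightarrow>
          ((k \<le> a0 \<and> k \<le> Suc b0 \<and> Suc b0 < n) \<longrightarrow> k < ?nE)"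
        unfolding Xh_nat P_nat using P ij' by auto
      have L3: "((0 < a0 \<and> 0 < k \<and> (int (a0-1), int b0, int (k-1)) \<in> Pmn m n) \<longrightarrow> (int (a0-1), int b0, int (k-1)) \<in> Xh m n h) \<longleftrightarrow>
          ((0 < k \<and> 0 < a0 \<and> k - 1 \<le> a0 - 1 \<and> k - 1 \<le> b0) \<longrightarrow> k - 1 < ?nN)"
        unfolding Xh_nat P_nat using P ij' by (cases a0) auto
      have L4: "((0 < b0 \<and> 0 < k \<and> (int a0, int (b0-1), int (k-1)) \<in> Pmn m n) \<longrightarrow> (int a0, int (b0-1), int (k-1)) \<in> Xh m n h) \<longleftrightarrow>
          ((0 < k \<and> 0 < b0 \<and> k - 1 \<le> a0 \<and> k - 1 \<le> b0 - 1) \<longrightarrow> k - 1 < ?nW)"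
        unfolding Xh_nat P_nat using P ij' by (cases b0) auto
      have nb: "?nN \<le> ?c" "?c \<le> Suc ?nN" "?nW \<le> ?c" "?c \<le> Suc ?nW"
        "i < m \<Longrightarrow> ?c \<le> ?nS \<and> ?nS \<le> Suc ?c" "j < n \<Longrightarrow> ?c \<le> ?nE \<and> ?nE \<le> Suc ?c"
        using nbrs[OF h ij] ij' by auto
      have bd: "?c \<le> Suc a0" "?c \<le> Suc b0" "?nN \<le> a0" "?nW \<le> b0"
        "i < m \<Longrightarrow> ?nS \<le> Suc b0" "j < n \<Longrightarrow> ?nE \<le> Suc a0"
        using Hval_bound[OF h, of i j] Hval_bound[OF h, of a0 j] Hval_bound[OF h, of i b0]
          Hval_bound[OF h, of "Suc i" j] Hval_bound[OF h, of i "Suc j"] ij ij' by auto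
      have nc: "newc m n h i j = (if ?nN = ?c \<and> ?nW = ?c \<and> (Suc a0 < m \<longrightarrow> ?nS = Suc ?c) \<and> (Suc b0 < n \<longrightarrow> ?nE = Suc ?c) then Suc ?c
          else if Suc ?nN = ?c \<and> Suc ?nW = ?c \<and> (Suc a0 < m \<longrightarrow> ?nS = ?c) \<and> (Suc b0 < n \<longrightarrow> ?nE = ?c) then ?c - 1 else ?c)"
      proof -
        have e: "i - 1 = a0" "j - 1 = b0" "(Suc a0 < m) = (i < m)" "(Suc b0 < n) = (j < n)" using ij' by auto
        show ?thesis by (simp only: newc_def e)
      qed
      have "x \<in> togS m n (fiber m n (i,j)) (Xh m n h) \<longleftrightarrow> trule m n x (Xh m n h)"
        using togS_in[OF inF] True by blast
      also have "\<dots> \<longleftrightarrow> (k < ?c \<and> ((0 < a0 \<and> k < a0 \<and> k \<le> b0 \<and> k < ?nN) \<or> (0 < b0 \<and> k \<le> a0 \<and> k < b0 \<and> k < ?nW) \<or>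
            (Suc k \<le> Suc a0 \<and> Suc k \<le> b0 \<and> Suc a0 < m \<and> Suc k < ?nS) \<or>
            (Suc k \<le> a0 \<and> Suc k \<le> Suc b0 \<and> Suc b0 < n \<and> Suc k < ?nE))) \<or>
         (\<not> k < ?c \<and> ((k \<le> Suc a0 \<and> k \<le> b0 \<and> Suc a0 < m) \<longrightarrow> k < ?nS) \<and>
            ((k \<le> a0 \<and> k \<le> Suc b0 \<and> Suc b0 < n) \<longrightarrow> k < ?nE) \<and>
            ((0 < k \<and> 0 < a0 \<and> k - 1 \<le> a0 - 1 \<and> k - 1 \<le> b0) \<longrightarrow> k - 1 < ?nN) \<and>
            ((0 < k \<and> 0 < b0 \<and> k - 1 \<le> a0 \<and> k - 1 \<le> b0 - 1) \<longrightarrow> k - 1 < ?nW))"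
        unfolding trule_def xe upcov[OF XP True[unfolded xe]] lowcov[OF XP True[unfolded xe]]
        unfolding X0[unfolded xe] U1 U2 U3 U4 L1 L2 L3 L4 ..
      also have "\<dots> \<longleftrightarrow> k < newc m n h i j"
        by (rule tog_arith[OF P nb(1-4) _ _ bd(1-4) _ _ nc]) (use nb(5,6) bd(5,6) ij' in auto)
      finally show ?thesis using X1 by simp
    qed
  qed
qed



lemma la_0: "i = 0 \<or> j = 0 \<Longrightarrow> local_action m n (i,j) F = F"
  by (auto simp: local_action_def Let_def)

lemma fold_step:
  assumes "\<forall>q\<in>set qs. fst q \<le> m \<and> snd q \<le> n" "Hval m n h"
  shows "Hval m n (fold (\<lambda>q h. htog m n h q) qs h) \<and>
    fold (local_action m n) qs (Fh m n h) = Fh m n (fold (\<lambda>q h. htog m n h q) qs h) \<and>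
    Xh m n (fold (\<lambda>q h. htog m n h q) qs h) = fold (\<lambda>q. togS m n (fiber m n q)) qs (Xh m n h)"
  using assms
proof (induction qs arbitrary: h)
  case Nil then show ?case by simp
next
  case (Cons q qs)
  obtain i j where q: "q = (i,j)" by (cases q)
  have ij: "i \<le> m" "j \<le> n" using Cons.prems q by auto
  let ?h1 = "htog m n h (i,j)"
  have H1: "Hval m n ?h1" using Hval_htog[OF Cons.prems(2) ij] .
  have L1: "local_action m n (i,j) (Fh m n h) = Fh m n ?h1"
  proof (cases "i = 0 \<or> j = 0")
    case True then show ?thesis using la_0 htog_0 by metis
  next
    case False then show ?thesis using la_Fh[OF Cons.prems(2)] ij by auto
  qed
  have X1: "Xh m n ?h1 = togS m n (fiber m n (i,j)) (Xh m n h)"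
  proof (cases "i = 0 \<or> j = 0")
    case True then show ?thesis using fiber0 htog_0 togS_empty by metis
  next
    case False then show ?thesis using Xh_htog[OF Cons.prems(2)] ij by auto
  qed
  have IH: "Hval m n (fold (\<lambda>q h. htog m n h q) qs ?h1) \<and>
    fold (local_action m n) qs (Fh m n ?h1) = Fh m n (fold (\<lambda>q h. htog m n h q) qs ?h1) \<and>
    Xh m n (fold (\<lambda>q h. htog m n h q) qs ?h1) = fold (\<lambda>q. togS m n (fiber m n q)) qs (Xh m n ?h1)"
    using Cons.IH[OF _ H1] Cons.prems(1) by auto
  show ?case using IH L1 X1 q by simp
qed

lemma cover_sum:
  "(y,x) \<in> cover_rel m n \<Longrightarrow> fst y + fst (snd y) = fst x + fst (snd x) + 1 \<or> fst y + fst (snd y) = fst x + fst (snd x) - 1"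
  by (auto simp: cover_rel_def split: prod.splits)

lemma fiber_sum: "x \<in> fiber m n (i,j) \<Longrightarrow> fst x + fst (snd x) = int (i + j) - 2"
  by (auto simp: fiber_def)

lemma fold_fibers:
  assumes "distinct qs" "\<forall>q\<in>set qs. even (fst q + snd q) = ev"
  shows "fold (\<lambda>q. togS m n (fiber m n q)) qs Y = togS m n (\<Union>q\<in>set qs. fiber m n q) Y"
  using assms
proof (induction qs arbitrary: Y)
  case Nil then show ?case by simp
next
  case (Cons q qs)
  obtain i j where q: "q = (i,j)" by (cases q)
  have disj: "(\<Union>q\<in>set qs. fiber m n q) \<inter> fiber m n q = {}"
  proof (rule ccontr)
    assume "(\<Union>q\<in>set qs. fiber m n q) \<inter> fiber m n q \<noteq> {}"
    then obtain x q' where x: "q' \<in> set qs" "x \<in> fiber m n q'" "x \<in> fiber m n q" by blast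
    obtain i' j' where q': "q' = (i',j')" by (cases q')
    have "int i' - 1 = int i - 1" "int j' - 1 = int j - 1" using x q q' by (auto simp: fiber_def)
    then have "q' = q" using q q' by auto
    then show False using x(1) Cons.prems(1) by auto
  qed
  have nc: "nocov m n (\<Union>q\<in>set qs. fiber m n q) (fiber m n q)"
    unfolding nocov_def
  proof (intro ballI conjI)
    fix a b assume a: "a \<in> (\<Union>q\<in>set qs. fiber m n q)" and b: "b \<in> fiber m n q"
    obtain q' where q': "q' \<in> set qs" "a \<in> fiber m n q'" using a by blast
    obtain i' j' where q'e: "q' = (i',j')" by (cases q')
    have sa: "fst a + fst (snd a) = int (i' + j') - 2" using fiber_sum q'(2) q'e by blast
    have sb: "fst b + fst (snd b) = int (i + j) - 2" using fiber_sum b q by blast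
    have par: "even (i' + j') = even (i + j)" using Cons.prems(2) q'(1) q'e q by auto
    have np: "int (i' + j') \<noteq> int (i + j) + 1 \<and> int (i' + j') \<noteq> int (i + j) - 1"
    proof
      show "int (i' + j') \<noteq> int (i + j) + 1"
      proof
        assume "int (i' + j') = int (i + j) + 1"
        then have "i' + j' = Suc (i + j)" by linarith
        then show False using par by presburger
      qed
      show "int (i' + j') \<noteq> int (i + j) - 1"
      proof
        assume "int (i' + j') = int (i + j) - 1"
        then have "Suc (i' + j') = i + j" by linarith
        then show False using par by presburger
      qed
    qed
    show "(a,b) \<notin> cover_rel m n"
      using cover_sum[of a b m n] sa sb np by auto
    show "(b,a) \<notin> cover_rel m n"
      using cover_sum[of b a m n] sa sb np by auto
  qed
  have "fold (\<lambda>q. togS m n (fiber m n q)) (q # qs) Y = togS m n (\<Union>q\<in>set qs. fiber m n q) (togS m n (fiber m n q) Y)"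
    using Cons by simp
  also have "\<dots> = togS m n ((\<Union>q\<in>set qs. fiber m n q) \<union> fiber m n q) Y"
    by (rule togS_union[symmetric, OF disj nc])
  also have "(\<Union>q\<in>set qs. fiber m n q) \<union> fiber m n q = (\<Union>q\<in>set (q # qs). fiber m n q)" by auto
  finally show ?case .
qed

lemma set_sq: "set (squares_of_parity m n ev) = {(i,j). i \<le> m \<and> j \<le> n \<and> even (i+j) = ev}"
  unfolding squares_of_parity_def by (auto simp del: upt_Suc simp: less_Suc_eq_le)

lemma dl: "distinct (concat (map (\<lambda>i. concat (map (\<lambda>j. if P i j then [(i,j)] else []) ys)) xs))"
  if "distinct xs" "distinct ys"
  using that
proof (induction xs)
  case Nil then show ?case by simp
next
  case (Cons x xs)
  have "distinct (concat (map (\<lambda>j. if P x j then [(x,j)] else []) ys))"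
    using Cons.prems(2) by (induction ys) auto
  then show ?case using Cons by auto
qed

lemma distinct_sq: "distinct (squares_of_parity m n ev)"
  unfolding squares_of_parity_def by (rule dl) simp_all

lemma union_fibers: "(\<Union>q\<in>set (squares_of_parity m n ev). fiber m n q) = {x \<in> Pmn m n. even (rk x) = ev}"
proof (rule set_eqI)
  fix x
  show "x \<in> (\<Union>q\<in>set (squares_of_parity m n ev). fiber m n q) \<longleftrightarrow> x \<in> {x \<in> Pmn m n. even (rk x) = ev}"
  proof (cases "x \<in> Pmn m n")
    case False then show ?thesis by (auto simp: fiber_def)
  next
    case True
    then obtain a b k where xe: "x = (int a, int b, int k)" using P_elem by blast
    have P: "k \<le> a" "k \<le> b" "a < m" "b < n" using True unfolding xe P_nat by auto
    have rk: "rk x = a + b - 2 * k" unfolding xe rk_def using P by auto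
    have ev: "even (rk x) = even (Suc a + Suc b)" unfolding rk using P by auto
    have "x \<in> (\<Union>q\<in>set (squares_of_parity m n ev). fiber m n q) \<longleftrightarrow> (Suc a, Suc b) \<in> set (squares_of_parity m n ev)"
    proof
      assume "x \<in> (\<Union>q\<in>set (squares_of_parity m n ev). fiber m n q)"
      then obtain i j where "(i,j) \<in> set (squares_of_parity m n ev)" "x \<in> fiber m n (i,j)" by auto
      then show "(Suc a, Suc b) \<in> set (squares_of_parity m n ev)" unfolding xe fiber_nat by auto
    next
      assume "(Suc a, Suc b) \<in> set (squares_of_parity m n ev)"
      moreover have "x \<in> fiber m n (Suc a, Suc b)" unfolding xe fiber_nat using True xe by simp
      ultimately show "x \<in> (\<Union>q\<in>set (squares_of_parity m n ev). fiber m n q)" by blast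
    qed
    also have "\<dots> \<longleftrightarrow> even (Suc a + Suc b) = ev" unfolding set_sq using P by auto
    finally show ?thesis using True ev by auto
  qed
qed

lemma fold_parity:
  "fold (\<lambda>q. togS m n (fiber m n q)) (squares_of_parity m n ev) Y = togS m n {x \<in> Pmn m n. even (rk x) = ev} Y"
proof -
  have par: "\<forall>q\<in>set (squares_of_parity m n ev). even (fst q + snd q) = ev" using set_sq by auto
  show ?thesis using fold_fibers[OF distinct_sq par] union_fibers[of m n ev] by simp
qed

definition Psi :: "nat \<Rightarrow> nat \<Rightarrow> edge set \<Rightarrow> pt set" where
  "Psi m n F = Xh m n (hgt F)"

lemma Psi_bij: "bij_betw (Psi m n) (PFPL m n) (order_ideals m n)"
  unfolding bij_betw_def
proof
  show "inj_on (Psi m n) (PFPL m n)"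
  proof (rule inj_onI)
    fix F F' assume F: "F \<in> PFPL m n" and F': "F' \<in> PFPL m n" and e: "Psi m n F = Psi m n F'"
    have "\<And>i j. i \<le> m \<Longrightarrow> j \<le> n \<Longrightarrow> hgt F i j = hgt F' i j"
      using Xh_inj[OF Hval_hgt[OF F] Hval_hgt[OF F']] e unfolding Psi_def by blast
    then have "Fh m n (hgt F) = Fh m n (hgt F')" by (rule Fh_cong)
    then show "F = F'" using Fh_hgt[OF F] Fh_hgt[OF F'] by simp
  qed
  show "Psi m n ` PFPL m n = order_ideals m n"
  proof
    show "Psi m n ` PFPL m n \<subseteq> order_ideals m n"
      unfolding Psi_def using Xh_ideal Hval_hgt by blast
  next
    show "order_ideals m n \<subseteq> Psi m n ` PFPL m n"
    proof
      fix X assume X: "X \<in> order_ideals m n"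
      let ?h = "hX X"
      have h: "Hval m n ?h" by (rule Hval_hX[OF X])
      have "Fh m n ?h \<in> PFPL m n" by (rule Fh_PFPL[OF h])
      moreover have "Psi m n (Fh m n ?h) = X"
      proof -
        have "Xh m n (hgt (Fh m n ?h)) = Xh m n ?h"
          by (rule Xh_cong) (use hgt_Fh[OF h] in auto)
        then show ?thesis using X_Xh[OF X] unfolding Psi_def by simp
      qed
      ultimately show "X \<in> Psi m n ` PFPL m n" by (metis imageI)
    qed
  qed
qed

lemma Psi_gyr:
  assumes F: "F \<in> PFPL m n"
  shows "Psi m n (gyration m n F) = OdAll m n (EvAll m n (Psi m n F))"
proof -
  let ?h = "hgt F"
  let ?f = "\<lambda>q h. htog m n h q"
  have h: "Hval m n ?h" by (rule Hval_hgt[OF F])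
  have rng: "\<And>ev. \<forall>q\<in>set (squares_of_parity m n ev). fst q \<le> m \<and> snd q \<le> n"
    using set_sq by auto
  let ?h1 = "fold ?f (squares_of_parity m n True) ?h"
  let ?h2 = "fold ?f (squares_of_parity m n False) ?h1"
  have s1: "Hval m n ?h1 \<and> fold (local_action m n) (squares_of_parity m n True) (Fh m n ?h) = Fh m n ?h1 \<and>
      Xh m n ?h1 = fold (\<lambda>q. togS m n (fiber m n q)) (squares_of_parity m n True) (Xh m n ?h)"
    by (rule fold_step[OF rng h])
  have s2: "Hval m n ?h2 \<and> fold (local_action m n) (squares_of_parity m n False) (Fh m n ?h1) = Fh m n ?h2 \<and>
      Xh m n ?h2 = fold (\<lambda>q. togS m n (fiber m n q)) (squares_of_parity m n False) (Xh m n ?h1)"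
    by (rule fold_step[OF rng]) (use s1 in blast)
  have "gyration m n F = fold (local_action m n) (squares_of_parity m n False)
      (fold (local_action m n) (squares_of_parity m n True) (Fh m n ?h))"
    unfolding gyration_def using Fh_hgt[OF F] by simp
  also have "\<dots> = Fh m n ?h2" using s1 s2 by simp
  finally have g: "gyration m n F = Fh m n ?h2" .
  have "Psi m n (gyration m n F) = Xh m n ?h2"
    unfolding g Psi_def by (rule Xh_cong) (use hgt_Fh s2 in auto)
  also have "\<dots> = togS m n {x \<in> Pmn m n. even (rk x) = False} (togS m n {x \<in> Pmn m n. even (rk x) = True} (Xh m n ?h))"
    using s1 s2 by (simp add: fold_parity)
  also have "\<dots> = OdAll m n (EvAll m n (Psi m n F))"
    unfolding OdAll_def EvAll_def Psi_def by simp
  finally show ?thesis .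
qed

theorem theorem4p6:
  fixes m n :: nat
  assumes "0 < m" and "0 < n"
  shows "\<exists>\<Phi>. bij_betw \<Phi> (PFPL m n) (order_ideals m n) \<and>
              (\<forall>F \<in> PFPL m n. \<Phi> (gyration m n F) = rowmotion m n (\<Phi> F))"
proof -
  obtain C where C: "bij_betw C (order_ideals m n) (order_ideals m n)"
    "\<forall>Y \<in> order_ideals m n. OdAll m n (EvAll m n (C Y)) = C (rowmotion m n Y)"
    using toggle_conj by blast
  let ?Ci = "inv_into (order_ideals m n) C"
  let ?Phi = "?Ci \<circ> Psi m n"
  have Ci: "bij_betw ?Ci (order_ideals m n) (order_ideals m n)" by (rule bij_betw_inv_into[OF C(1)])
  have "bij_betw ?Phi (PFPL m n) (order_ideals m n)"
    by (rule bij_betw_trans[OF Psi_bij Ci])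
  moreover have "?Phi (gyration m n F) = rowmotion m n (?Phi F)" if F: "F \<in> PFPL m n" for F
  proof -
    have PF: "Psi m n F \<in> order_ideals m n" using Psi_bij F bij_betwE by blast
    let ?Y = "?Ci (Psi m n F)"
    have Y: "?Y \<in> order_ideals m n" using Ci PF bij_betwE by blast
    have CY: "C ?Y = Psi m n F"
      using PF C(1) by (simp add: bij_betw_def f_inv_into_f)
    have RY: "rowmotion m n ?Y \<in> order_ideals m n" by (rule Row_ideal)
    have e1: "?Phi (gyration m n F) = ?Ci (OdAll m n (EvAll m n (Psi m n F)))"
      using Psi_gyr[OF F] by simp
    have e2: "OdAll m n (EvAll m n (Psi m n F)) = C (rowmotion m n ?Y)"
      using C(2) Y CY by auto
    have e3: "?Ci (C (rowmotion m n ?Y)) = rowmotion m n ?Y"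
      using C(1) RY by (simp add: bij_betw_def inv_into_f_f)
    show ?thesis using e1 e2 e3 by simp
  qed
  ultimately show ?thesis by blast
qed

end
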